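(* Let $M_P$ be the Pappus configuration on $[9]$ with lines $\{1,2,3\},\{1,6,8\},\{7,8,9\},\{2,6,9\},\{2,4,7\},\{3,5,9\},\{3,4,8\},\{1,5,7\},\{4,5,6\}$. Let $C$ be the matroid on $[9]$ obtained by identifying $1$ with $3$, $4$ with $6$, and $7$ with $9$; explicitly, with classes $A=\{1,3\}$, $B=\{4,6\}$, $C'=\{7,9\}$, $\{2\},\{5\},\{8\}$ and quotient map $\pi$, $C$ has rank function $S\mapsto\operatorname{rank}_P(\pi(S))$ where $P$ is the point-line configuration on these six classes with lines $\{A,B,8\},\{B,2,C'\},\{C',5,A\}$. Then for every automorphism $\sigma$ of $M_P$, \[ V_{\mathcal{C}(\sigma C)}=V_{\sigma C}\subseteq V_{M_P}\quad\text{in }\mathbb{C}^{27}, \] where $\sigma C$ is the matroid whose dependent sets are $\sigma(S)$ for $S$ dependent in $C$.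
   Context: A point-line configuration is a simple matroid of rank $\le3$; its lines are the maximal subsets of size $\ge3$ and rank $2$. An automorphism of $M_P$ is a permutation $\sigma$ of $[9]$ such that $S$ is dependent in $M_P$ iff $\sigma(S)$ is. For a matroid $K$ on $[d]$ of rank $\le3$: a realization is $\gamma\in(\mathbb{C}^3)^d$ such that for all $S\subseteq[d]$, $(\gamma_s)_{s\in S}$ is linearly dependent iff $S$ is dependent in $K$; $V_K$ is the Zariski closure in $\mathbb{C}^{3d}$ of the set of realizations; the circuit variety $V_{\mathcal{C}(K)}$ is the set of $\gamma\in(\mathbb{C}^3)^d$ such that $(\gamma_s)_{s\in S}$ is linearly dependent for every dependent set $S$ of $K$. *)

theory Defs
  imports "HOL-Analysis.Analysis"
begin

text \<open>Configurations of d points in C^3 are elements of the extensional function space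
  {1..d} ->E UNIV, identified with C^(3d).\<close>

type_synonym config = "nat \<Rightarrow> complex^3"

definition ambient :: "nat \<Rightarrow> config set" where
  "ambient d = ({1..d} \<rightarrow>\<^sub>E (UNIV :: (complex^3) set))"

definition fam_dependent :: "config \<Rightarrow> nat set \<Rightarrow> bool" where
  "fam_dependent \<gamma> S \<longleftrightarrow>
     (\<exists>c :: nat \<Rightarrow> complex. (\<exists>s\<in>S. c s \<noteq> 0) \<and> (\<Sum>s\<in>S. c s *s \<gamma> s) = 0)"

inductive_set poly_funs :: "nat \<Rightarrow> (config \<Rightarrow> complex) set" for d :: nat where
  pconst: "(\<lambda>_. c) \<in> poly_funs d"
| pvar: "i \<in> {1..d} \<Longrightarrow> (\<lambda>\<gamma>. \<gamma> i $ j) \<in> poly_funs d"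
| padd: "p \<in> poly_funs d \<Longrightarrow> q \<in> poly_funs d \<Longrightarrow> (\<lambda>\<gamma>. p \<gamma> + q \<gamma>) \<in> poly_funs d"
| pmult: "p \<in> poly_funs d \<Longrightarrow> q \<in> poly_funs d \<Longrightarrow> (\<lambda>\<gamma>. p \<gamma> * q \<gamma>) \<in> poly_funs d"

definition zariski_closure :: "nat \<Rightarrow> config set \<Rightarrow> config set" where
  "zariski_closure d X = {x \<in> ambient d. \<forall>p\<in>poly_funs d. (\<forall>y\<in>X. p y = 0) \<longrightarrow> p x = 0}"

text \<open>A matroid K on [d] is given by its predicate of dependent sets (on subsets of [d]).\<close>
definition realizations :: "nat \<Rightarrow> (nat set \<Rightarrow> bool) \<Rightarrow> config set" where
  "realizations d K = {\<gamma> \<in> ambient d. \<forall>S\<subseteq>{1..d}. fam_dependent \<gamma> S \<longleftrightarrow> K S}"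

definition matroid_variety :: "nat \<Rightarrow> (nat set \<Rightarrow> bool) \<Rightarrow> config set" where
  "matroid_variety d K = zariski_closure d (realizations d K)"

definition circuit_variety :: "nat \<Rightarrow> (nat set \<Rightarrow> bool) \<Rightarrow> config set" where
  "circuit_variety d K = {\<gamma> \<in> ambient d. \<forall>S\<subseteq>{1..d}. K S \<longrightarrow> fam_dependent \<gamma> S}"

definition plc_rank :: "'a set set \<Rightarrow> 'a set \<Rightarrow> nat" where
  "plc_rank L T = (if card T \<le> 2 then card T else if (\<exists>l\<in>L. T \<subseteq> l) then 2 else 3)"

definition pappus_lines :: "nat set set" where
  "pappus_lines = {{1,2,3},{1,6,8},{7,8,9},{2,6,9},{2,4,7},{3,5,9},{3,4,8},{1,5,7},{4,5,6}}"

definition MP_dep :: "nat set \<Rightarrow> bool" where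
  "MP_dep S \<longleftrightarrow> S \<subseteq> {1..9} \<and> plc_rank pappus_lines S < card S"

text \<open>Quotient map: classes A={1,3}, B={4,6}, C'={7,9} represented by 1,4,7.\<close>
definition quot_map :: "nat \<Rightarrow> nat" where
  "quot_map i = (if i = 3 then 1 else if i = 6 then 4 else if i = 9 then 7 else i)"

definition P_lines :: "nat set set" where
  "P_lines = {{1,4,8},{4,2,7},{7,5,1}}"

definition C_rank :: "nat set \<Rightarrow> nat" where
  "C_rank S = plc_rank P_lines (quot_map ` S)"

definition C_dep :: "nat set \<Rightarrow> bool" where
  "C_dep S \<longleftrightarrow> S \<subseteq> {1..9} \<and> C_rank S < card S"

definition automorphism_MP :: "(nat \<Rightarrow> nat) \<Rightarrow> bool" where
  "automorphism_MP \<sigma> \<longleftrightarrow> bij_betw \<sigma> {1..9} {1..9} \<and>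
     (\<forall>S\<subseteq>{1..9}. MP_dep S \<longleftrightarrow> MP_dep (\<sigma> ` S))"

definition perm_dep :: "(nat \<Rightarrow> nat) \<Rightarrow> (nat set \<Rightarrow> bool) \<Rightarrow> nat set \<Rightarrow> bool" where
  "perm_dep \<sigma> K T \<longleftrightarrow> (\<exists>S. K S \<and> T = \<sigma> ` S)"

end

theory Submission
  imports Defs "HOL-Computational_Algebra.Polynomial"
begin


section \<open>Univariate polynomial functions\<close>

definition pf1 :: "(complex \<Rightarrow> complex) \<Rightarrow> bool" where
  "pf1 f \<longleftrightarrow> (\<exists>P. \<forall>t. f t = poly P t)"

lemma pf1_const[intro]: "pf1 (\<lambda>t. c)"
  unfolding pf1_def by (rule exI[of _ "[:c:]"]) simp

lemma pf1_id[intro]: "pf1 (\<lambda>t. t)"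
  unfolding pf1_def by (rule exI[of _ "[:0,1:]"]) simp

lemma pf1_add[intro]: "pf1 f \<Longrightarrow> pf1 g \<Longrightarrow> pf1 (\<lambda>t. f t + g t)"
  unfolding pf1_def
proof (elim exE)
  fix P Q assume "\<forall>t. f t = poly P t" "\<forall>t. g t = poly Q t"
  then show "\<exists>R. \<forall>t. f t + g t = poly R t" by (intro exI[of _ "P + Q"]) simp
qed

lemma pf1_mult[intro]: "pf1 f \<Longrightarrow> pf1 g \<Longrightarrow> pf1 (\<lambda>t. f t * g t)"
  unfolding pf1_def
proof (elim exE)
  fix P Q assume "\<forall>t. f t = poly P t" "\<forall>t. g t = poly Q t"
  then show "\<exists>R. \<forall>t. f t * g t = poly R t" by (intro exI[of _ "P * Q"]) simp
qed

lemma pf1_minus[intro]: "pf1 f \<Longrightarrow> pf1 (\<lambda>t. - f t)"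
  unfolding pf1_def
proof (elim exE)
  fix P assume "\<forall>t. f t = poly P t"
  then show "\<exists>R. \<forall>t. - f t = poly R t" by (intro exI[of _ "- P"]) simp
qed

lemma pf1_diff[intro]: "pf1 f \<Longrightarrow> pf1 g \<Longrightarrow> pf1 (\<lambda>t. f t - g t)"
  unfolding pf1_def
proof (elim exE)
  fix P Q assume "\<forall>t. f t = poly P t" "\<forall>t. g t = poly Q t"
  then show "\<exists>R. \<forall>t. f t - g t = poly R t" by (intro exI[of _ "P - Q"]) simp
qed

lemma pf1_prod: "finite A \<Longrightarrow> (\<And>a. a \<in> A \<Longrightarrow> pf1 (f a)) \<Longrightarrow> pf1 (\<lambda>t. \<Prod>a\<in>A. f a t)"
proof (induction A rule: finite_induct)
  case empty then show ?case by (simp add: pf1_const)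
next
  case (insert x F)
  then show ?case by (simp add: pf1_mult)
qed

lemma pf1_comp:
  assumes "p \<in> poly_funs d" "\<And>i j. i \<in> {1..d} \<Longrightarrow> pf1 (\<lambda>t. \<phi> t i $ j)"
  shows "pf1 (\<lambda>t. p (\<phi> t))"
  using assms(1)
proof (induction rule: poly_funs.induct)
  case (pconst c) then show ?case by auto
next
  case (pvar i j) then show ?case using assms(2) by auto
next
  case (padd p q) then show ?case by auto
next
  case (pmult p q) then show ?case by auto
qed


lemma cl_ambient: "zariski_closure d X \<subseteq> ambient d"
  unfolding zariski_closure_def by auto

lemma cl_sup: "X \<subseteq> ambient d \<Longrightarrow> X \<subseteq> zariski_closure d X"
  unfolding zariski_closure_def by auto

lemma cl_trans: "X \<subseteq> zariski_closure d Y \<Longrightarrow> zariski_closure d X \<subseteq> zariski_closure d Y"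
  unfolding zariski_closure_def by blast

lemma cl_mono: "X \<subseteq> Y \<Longrightarrow> zariski_closure d X \<subseteq> zariski_closure d Y"
  unfolding zariski_closure_def by blast

lemma curve_closure:
  assumes amb: "\<And>t. \<phi> t \<in> ambient d"
    and pc: "\<And>i j. i \<in> {1..d} \<Longrightarrow> pf1 (\<lambda>t. \<phi> t i $ j)"
    and pg: "pf1 g" and g1: "g tz \<noteq> 0"
    and inY: "\<And>t. g t \<noteq> 0 \<Longrightarrow> \<phi> t \<in> Y"
  shows "\<phi> 0 \<in> zariski_closure d Y"
  unfolding zariski_closure_def
proof (intro CollectI conjI ballI impI)
  show "\<phi> 0 \<in> ambient d" by (rule amb)
  fix p assume p: "p \<in> poly_funs d" and van: "\<forall>y\<in>Y. p y = 0"
  have "pf1 (\<lambda>t. p (\<phi> t))" apply (rule pf1_comp[OF p]) using pc by blast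
  then obtain P where P: "\<And>t. p (\<phi> t) = poly P t" unfolding pf1_def by blast
  obtain Q where Q: "\<And>t. g t = poly Q t" using pg unfolding pf1_def by blast
  have "\<forall>t. poly (P * Q) t = 0"
  proof
    fix t show "poly (P * Q) t = 0"
    proof (cases "g t = 0")
      case True then show ?thesis using Q by simp
    next
      case False then have "p (\<phi> t) = 0" using van inY by blast
      then show ?thesis using P by simp
    qed
  qed
  then have "P * Q = 0" using poly_all_0_iff_0 by blast
  moreover have "Q \<noteq> 0" using g1 Q by auto
  ultimately have "P = 0" by simp
  then show "p (\<phi> 0) = 0" using P by simp
qed

lemma poly_funs_comp:
  assumes "p \<in> poly_funs d'" "\<And>i j. i \<in> {1..d'} \<Longrightarrow> (\<lambda>x. F x i $ j) \<in> poly_funs d"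
  shows "(\<lambda>x. p (F x)) \<in> poly_funs d"
  using assms(1)
proof (induction rule: poly_funs.induct)
  case (pconst c) then show ?case by (rule poly_funs.pconst)
next
  case (pvar i j) then show ?case using assms(2) by auto
next
  case (padd p q) then show ?case using padd.IH by (intro poly_funs.padd) auto
next
  case (pmult p q) then show ?case using pmult.IH by (intro poly_funs.pmult) auto
qed

lemma transfer_closure:
  assumes famb: "\<And>x. x \<in> ambient d \<Longrightarrow> F x \<in> ambient d'"
    and fp: "\<And>i j. i \<in> {1..d'} \<Longrightarrow> (\<lambda>x. F x i $ j) \<in> poly_funs d"
    and FXY: "\<And>x. x \<in> X \<Longrightarrow> F x \<in> Y"
    and x: "x \<in> zariski_closure d X"
  shows "F x \<in> zariski_closure d' Y"
  unfolding zariski_closure_def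
proof (intro CollectI conjI ballI impI)
  show "F x \<in> ambient d'" using x famb cl_ambient by blast
  fix p assume p: "p \<in> poly_funs d'" and van: "\<forall>y\<in>Y. p y = 0"
  have pp: "(\<lambda>x. p (F x)) \<in> poly_funs d" by (rule poly_funs_comp[OF p fp])
  have zz: "\<forall>y\<in>X. p (F y) = 0" using van FXY by blast
  have h: "\<forall>q\<in>poly_funs d. (\<forall>y\<in>X. q y = 0) \<longrightarrow> q x = 0"
    using x unfolding zariski_closure_def by blast
  from h pp have "(\<forall>y\<in>X. (\<lambda>x. p (F x)) y = 0) \<longrightarrow> (\<lambda>x. p (F x)) x = 0" by (rule bspec)
  with zz show "p (F x) = 0" by simp
qed

lemma pvar': "i \<in> {1..d} \<Longrightarrow> (\<lambda>\<gamma>. \<gamma> i $ j) \<in> poly_funs d" by (rule poly_funs.pvar)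


section \<open>Linear algebra in C^3\<close>

definition det3 :: "complex^3 \<Rightarrow> complex^3 \<Rightarrow> complex^3 \<Rightarrow> complex" where
  "det3 u v w = u$1 * (v$2 * w$3 - v$3 * w$2) - u$2 * (v$1 * w$3 - v$3 * w$1) + u$3 * (v$1 * w$2 - v$2 * w$1)"

definition cr :: "complex^3 \<Rightarrow> complex^3 \<Rightarrow> complex^3" where
  "cr u v = vector [u$2 * v$3 - u$3 * v$2, u$3 * v$1 - u$1 * v$3, u$1 * v$2 - u$2 * v$1]"

lemma vec3_eq: "(x::complex^3) = y \<longleftrightarrow> x$1 = y$1 \<and> x$2 = y$2 \<and> x$3 = y$3"
  by (simp add: vec_eq_iff forall_3)

lemma vec3_zero: "(x::complex^3) = 0 \<longleftrightarrow> x$1 = 0 \<and> x$2 = 0 \<and> x$3 = 0"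
  by (simp add: vec3_eq)

lemma cr_comp: "cr u v $ 1 = u$2 * v$3 - u$3 * v$2" "cr u v $ 2 = u$3 * v$1 - u$1 * v$3" "cr u v $ 3 = u$1 * v$2 - u$2 * v$1"
  by (simp_all add: cr_def)

lemma cr_zero: "cr u v = 0 \<longleftrightarrow> u$2 * v$3 = u$3 * v$2 \<and> u$3 * v$1 = u$1 * v$3 \<and> u$1 * v$2 = u$2 * v$1"
  by (simp add: vec3_zero cr_comp)

lemma det3_lin1: "det3 (a *s u + b *s v + c *s w) v w = a * det3 u v w"
  by (simp add: det3_def algebra_simps)
lemma det3_lin2: "det3 u (a *s u + b *s v + c *s w) w = b * det3 u v w"
  by (simp add: det3_def algebra_simps)
lemma det3_lin3: "det3 u v (a *s u + b *s v + c *s w) = c * det3 u v w"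
  by (simp add: det3_def algebra_simps)

lemma det3_zero_left: "det3 0 v w = 0" by (simp add: det3_def)
lemma det3_zero_mid: "det3 u 0 w = 0" by (simp add: det3_def)
lemma det3_zero_right: "det3 u v 0 = 0" by (simp add: det3_def)

lemma four_identity:
  "det3 v w z *s u - det3 u w z *s v + det3 u v z *s w - det3 u v w *s z = 0"
  by (simp add: vec3_zero det3_def algebra_simps)

lemma parallel_of_cr:
  assumes "u \<noteq> 0" "cr u v = 0"
  shows "\<exists>k. v = k *s u"
proof -
  have e: "u$2 * v$3 = u$3 * v$2" "u$3 * v$1 = u$1 * v$3" "u$1 * v$2 = u$2 * v$1"
    using assms(2) by (simp_all add: cr_zero)
  consider "u$1 \<noteq> 0" | "u$2 \<noteq> 0" | "u$3 \<noteq> 0" using assms(1) by (auto simp: vec3_zero)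
  then show ?thesis
  proof cases
    case 1
    show ?thesis
      by (rule exI[of _ "v$1 / u$1"]) (use 1 e in \<open>auto simp: vec3_eq field_simps\<close>)
  next
    case 2
    show ?thesis
      by (rule exI[of _ "v$2 / u$2"]) (use 2 e in \<open>auto simp: vec3_eq field_simps\<close>)
  next
    case 3
    show ?thesis
      by (rule exI[of _ "v$3 / u$3"]) (use 3 e in \<open>auto simp: vec3_eq field_simps\<close>)
  qed
qed

lemma cr_scale: "cr u (k *s u) = 0"
  by (simp add: cr_zero algebra_simps)

lemma nonzero_comp: "(x::complex^3) \<noteq> 0 \<Longrightarrow> \<exists>j. x$j \<noteq> 0"
  by (auto simp: vec_eq_iff)

lemma fd_empty: "\<not> fam_dependent \<gamma> {}"
  by (simp add: fam_dependent_def)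

lemma fd_single: "fam_dependent \<gamma> {i} \<longleftrightarrow> \<gamma> i = 0"
proof
  assume "fam_dependent \<gamma> {i}"
  then obtain c where "c i \<noteq> 0" "c i *s \<gamma> i = 0" by (auto simp: fam_dependent_def)
  then show "\<gamma> i = 0" by (simp add: vec_eq_iff)
next
  assume "\<gamma> i = 0"
  then show "fam_dependent \<gamma> {i}" unfolding fam_dependent_def
    by (intro exI[of _ "\<lambda>_. 1"]) simp
qed

lemma fd_pair:
  assumes "i \<noteq> j"
  shows "fam_dependent \<gamma> {i,j} \<longleftrightarrow> cr (\<gamma> i) (\<gamma> j) = 0"
proof
  assume "fam_dependent \<gamma> {i,j}"
  then obtain c where c: "c i \<noteq> 0 \<or> c j \<noteq> 0" "c i *s \<gamma> i + c j *s \<gamma> j = 0"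
    using assms by (auto simp: fam_dependent_def)
  from c(2) have e: "c i * \<gamma> i $ l + c j * \<gamma> j $ l = 0" for l
    by (metis vector_add_component vector_smult_component zero_index)
  show "cr (\<gamma> i) (\<gamma> j) = 0"
  proof (cases "c i = 0")
    case True
    with c(1) have "c j \<noteq> 0" by simp
    with e True have "\<gamma> j $ l = 0" for l by simp
    then show ?thesis by (simp add: cr_zero)
  next
    case False
    have "\<gamma> i $ l = - (c j / c i) * \<gamma> j $ l" for l
    proof -
      from e[of l] have "c i * \<gamma> i $ l = - (c j * \<gamma> j $ l)" by (simp add: eq_neg_iff_add_eq_0)
      then show ?thesis using False by (simp add: field_simps)
    qed
    then show ?thesis by (simp add: cr_zero algebra_simps)
  qed
next
  assume h: "cr (\<gamma> i) (\<gamma> j) = 0"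
  show "fam_dependent \<gamma> {i,j}"
  proof (cases "\<gamma> i = 0")
    case True
    then show ?thesis unfolding fam_dependent_def using assms
      by (intro exI[of _ "\<lambda>x. if x = i then 1 else 0"]) auto
  next
    case False
    then obtain k where k: "\<gamma> j = k *s \<gamma> i" using parallel_of_cr h by blast
    show ?thesis unfolding fam_dependent_def using assms
      by (intro exI[of _ "\<lambda>x. if x = i then k else -1"]) (auto simp: k)
  qed
qed

lemma fd_triple:
  assumes "i \<noteq> j" "i \<noteq> k" "j \<noteq> k"
  shows "fam_dependent \<gamma> {i,j,k} \<longleftrightarrow> det3 (\<gamma> i) (\<gamma> j) (\<gamma> k) = 0"
proof
  assume "fam_dependent \<gamma> {i,j,k}"
  then obtain c where c: "c i \<noteq> 0 \<or> c j \<noteq> 0 \<or> c k \<noteq> 0"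
      "c i *s \<gamma> i + c j *s \<gamma> j + c k *s \<gamma> k = 0"
    using assms by (auto simp: fam_dependent_def add.assoc)
  have "c i * det3 (\<gamma> i) (\<gamma> j) (\<gamma> k) = 0"
    using det3_lin1[of "c i" "\<gamma> i" "c j" "\<gamma> j" "c k" "\<gamma> k"] c(2) by (simp add: det3_zero_left)
  moreover have "c j * det3 (\<gamma> i) (\<gamma> j) (\<gamma> k) = 0"
    using det3_lin2[of "\<gamma> i" "c i" "c j" "\<gamma> j" "c k" "\<gamma> k"] c(2) by (simp add: det3_zero_mid)
  moreover have "c k * det3 (\<gamma> i) (\<gamma> j) (\<gamma> k) = 0"
    using det3_lin3[of "\<gamma> i" "\<gamma> j" "c i" "c j" "c k" "\<gamma> k"] c(2) by (simp add: det3_zero_right)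
  ultimately show "det3 (\<gamma> i) (\<gamma> j) (\<gamma> k) = 0" using c(1) by auto
next
  assume d: "det3 (\<gamma> i) (\<gamma> j) (\<gamma> k) = 0"
  define u v w where "u = \<gamma> i" and "v = \<gamma> j" and "w = \<gamma> k"
  have ex: "\<exists>a b c. (a \<noteq> 0 \<or> b \<noteq> 0 \<or> c \<noteq> 0) \<and> a *s u + b *s v + c *s w = 0"
  proof (cases "\<exists>z. det3 v w z \<noteq> 0 \<or> det3 u w z \<noteq> 0 \<or> det3 u v z \<noteq> 0")
    case True
    then obtain z where z: "det3 v w z \<noteq> 0 \<or> det3 u w z \<noteq> 0 \<or> det3 u v z \<noteq> 0" by blast
    have "det3 v w z *s u + (- det3 u w z) *s v + det3 u v z *s w = 0"
      using four_identity[of v w z u] d by (simp add: u_def v_def w_def)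
    then show ?thesis using z
      by (intro exI[of _ "det3 v w z"] exI[of _ "- det3 u w z"] exI[of _ "det3 u v z"]) auto
  next
    case False
    then have z: "\<And>z. det3 u v z = 0" by blast
    have "cr u v = 0"
    proof -
      have "det3 u v (vector [0,0,1]) = cr u v $ 3" "det3 u v (vector [0,1,0]) = cr u v $ 2"
           "det3 u v (vector [1,0,0]) = cr u v $ 1"
        by (simp_all add: det3_def cr_comp algebra_simps)
      then show ?thesis using z by (simp add: vec3_zero)
    qed
    show ?thesis
    proof (cases "u = 0")
      case True then show ?thesis by (intro exI[of _ 1] exI[of _ 0]) simp
    next
      case False
      then obtain k where "v = k *s u" using parallel_of_cr \<open>cr u v = 0\<close> by blast
      then show ?thesis by (intro exI[of _ k] exI[of _ "-1"] exI[of _ 0]) simp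
    qed
  qed
  then obtain a b c where abc: "a \<noteq> 0 \<or> b \<noteq> 0 \<or> c \<noteq> 0" "a *s u + b *s v + c *s w = 0" by blast
  show "fam_dependent \<gamma> {i,j,k}" unfolding fam_dependent_def
    apply (rule exI[of _ "\<lambda>x. if x = i then a else if x = j then b else c"])
    using assms abc by (auto simp: u_def v_def w_def add.assoc)
qed

lemma fd_mono:
  assumes "finite T" "S \<subseteq> T" "fam_dependent \<gamma> S"
  shows "fam_dependent \<gamma> T"
proof -
  obtain c where c: "\<exists>s\<in>S. c s \<noteq> 0" "(\<Sum>s\<in>S. c s *s \<gamma> s) = 0"
    using assms(3) by (auto simp: fam_dependent_def)
  define c' where "c' = (\<lambda>s. if s \<in> S then c s else 0)"
  have "(\<Sum>s\<in>T. c' s *s \<gamma> s) = (\<Sum>s\<in>S. c' s *s \<gamma> s)"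
    by (rule sum.mono_neutral_right[OF assms(1) assms(2)]) (auto simp: c'_def)
  also have "\<dots> = (\<Sum>s\<in>S. c s *s \<gamma> s)" by (rule sum.cong) (auto simp: c'_def)
  finally show ?thesis unfolding fam_dependent_def using c assms(2)
    by (intro exI[of _ c']) (auto simp: c'_def)
qed

lemma card_ge_pick:
  assumes "finite S" "card S \<ge> Suc n"
  shows "\<exists>x\<in>S. card (S - {x}) \<ge> n"
proof -
  have "S \<noteq> {}" using assms by auto
  then obtain x where "x \<in> S" by blast
  then show ?thesis using assms by (intro bexI[of _ x]) (auto simp: card_Diff_singleton)
qed

lemma fd_big:
  assumes "finite S" "card S \<ge> 4"
  shows "fam_dependent \<gamma> S"
proof -
  obtain i where i: "i \<in> S" "card (S - {i}) \<ge> 3" using card_ge_pick[OF assms(1), of 3] assms(2) by auto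
  obtain j where j: "j \<in> S - {i}" "card (S - {i} - {j}) \<ge> 2"
    using card_ge_pick[of "S - {i}" 2] i assms(1) by auto
  obtain k where k: "k \<in> S - {i} - {j}" "card (S - {i} - {j} - {k}) \<ge> 1"
    using card_ge_pick[of "S - {i} - {j}" 1] j assms(1) by auto
  obtain l where l: "l \<in> S - {i} - {j} - {k}"
    using k(2) by (metis card.empty empty_iff not_one_le_zero subsetI subset_empty)
  have dist: "i \<noteq> j" "i \<noteq> k" "i \<noteq> l" "j \<noteq> k" "j \<noteq> l" "k \<noteq> l" using j k l by auto
  have sub: "{i,j,k,l} \<subseteq> S" using i j k l by auto
  show ?thesis
  proof (cases "fam_dependent \<gamma> {i,j,k}")
    case True show ?thesis using fd_mono[OF assms(1) _ True] sub by auto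
  next
    case False
    then have d: "det3 (\<gamma> i) (\<gamma> j) (\<gamma> k) \<noteq> 0" using fd_triple dist by blast
    let ?u = "\<gamma> i" and ?v = "\<gamma> j" and ?w = "\<gamma> k" and ?z = "\<gamma> l"
    have eq: "det3 ?v ?w ?z *s ?u + (- det3 ?u ?w ?z) *s ?v + (det3 ?u ?v ?z *s ?w + (- det3 ?u ?v ?w) *s ?z) = 0"
      using four_identity[of ?v ?w ?z ?u] by (simp add: algebra_simps)
    have "fam_dependent \<gamma> {i,j,k,l}" unfolding fam_dependent_def
      apply (rule exI[of _ "\<lambda>x. if x = i then det3 ?v ?w ?z else if x = j then - det3 ?u ?w ?z
                 else if x = k then det3 ?u ?v ?z else - det3 ?u ?v ?w"])
      using dist d eq by (auto simp: algebra_simps)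
    then show ?thesis by (rule fd_mono[OF assms(1) sub])
  qed
qed


lemma pf_const: "(\<lambda>_. c) \<in> poly_funs d" by (rule poly_funs.pconst)
lemma pf_add: "p \<in> poly_funs d \<Longrightarrow> q \<in> poly_funs d \<Longrightarrow> (\<lambda>\<gamma>. p \<gamma> + q \<gamma>) \<in> poly_funs d"
  by (rule poly_funs.padd)
lemma pf_mult: "p \<in> poly_funs d \<Longrightarrow> q \<in> poly_funs d \<Longrightarrow> (\<lambda>\<gamma>. p \<gamma> * q \<gamma>) \<in> poly_funs d"
  by (rule poly_funs.pmult)
lemma pf_diff: "p \<in> poly_funs d \<Longrightarrow> q \<in> poly_funs d \<Longrightarrow> (\<lambda>\<gamma>. p \<gamma> - q \<gamma>) \<in> poly_funs d"
proof -
  assume p: "p \<in> poly_funs d" and q: "q \<in> poly_funs d"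
  have "(\<lambda>\<gamma>. p \<gamma> + (\<lambda>_. -1) \<gamma> * q \<gamma>) \<in> poly_funs d"
    by (intro pf_add pf_mult p q pf_const)
  then show ?thesis by simp
qed

lemma pf_det3: "i \<in> {1..d} \<Longrightarrow> j \<in> {1..d} \<Longrightarrow> k \<in> {1..d} \<Longrightarrow>
   (\<lambda>\<gamma>. det3 (\<gamma> i) (\<gamma> j) (\<gamma> k)) \<in> poly_funs d"
  unfolding det3_def by (intro pf_add pf_mult pf_diff pvar')

lemma pf_cr: "i \<in> {1..d} \<Longrightarrow> j \<in> {1..d} \<Longrightarrow> (\<lambda>\<gamma>. cr (\<gamma> i) (\<gamma> j) $ l) \<in> poly_funs d"
proof -
  assume i: "i \<in> {1..d}" and j: "j \<in> {1..d}"
  have "\<forall>l. (\<lambda>\<gamma>. cr (\<gamma> i) (\<gamma> j) $ l) \<in> poly_funs d"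
    unfolding forall_3 cr_comp using i j by (intro conjI pf_diff pf_mult pvar')
  then show ?thesis by blast
qed

section \<open>Closedness of circuit varieties\<close>

lemma cl_vanish:
  assumes "x \<in> zariski_closure d Y" "p \<in> poly_funs d" "\<And>y. y \<in> Y \<Longrightarrow> p y = 0"
  shows "p x = 0"
  using assms unfolding zariski_closure_def by blast

lemma card3_cases:
  assumes "card S = 3" shows "\<exists>i j k. S = {i,j,k} \<and> i \<noteq> j \<and> i \<noteq> k \<and> j \<noteq> k"
  using assms card_3_iff[of S] by auto

lemma card2_cases:
  assumes "card S = 2" shows "\<exists>i j. S = {i,j} \<and> i \<noteq> j"
  using assms card_2_iff[of S] by auto

lemma fd_closed:
  assumes x: "x \<in> zariski_closure d Y" and S: "S \<subseteq> {1..d}"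
    and Y: "\<And>y. y \<in> Y \<Longrightarrow> fam_dependent y S"
  shows "fam_dependent x S"
proof -
  have fin: "finite S" using S finite_subset by blast
  consider "card S = 0" | "card S = 1" | "card S = 2" | "card S = 3" | "card S \<ge> 4" by linarith
  then show ?thesis
  proof cases
    case 1
    then have "S = {}" using fin by simp
    have "(\<lambda>_. 1::complex) x = 0"
      by (rule cl_vanish[OF x pf_const]) (use Y \<open>S = {}\<close> fd_empty in blast)
    then show ?thesis by simp
  next
    case 2
    then obtain i where Si: "S = {i}" using card_1_singletonE by blast
    have "x i $ l = 0" for l
    proof (rule cl_vanish[OF x pvar'])
      show "i \<in> {1..d}" using S Si by auto
      fix y assume "y \<in> Y"
      then have "y i = 0" using Y Si fd_single by blast
      then show "y i $ l = 0" by simp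
    qed
    then have "x i = 0" by (simp add: vec_eq_iff)
    then show ?thesis using Si fd_single by simp
  next
    case 3
    then obtain i j where Sij: "S = {i,j}" "i \<noteq> j" using card2_cases by blast
    have "cr (x i) (x j) $ l = 0" for l
      by (rule cl_vanish[OF x pf_cr]) (use S Sij Y fd_pair in auto)
    then have "cr (x i) (x j) = 0" by (simp add: vec_eq_iff)
    then show ?thesis using Sij fd_pair by simp
  next
    case 4
    then obtain i j k where Sijk: "S = {i,j,k}" "i \<noteq> j" "i \<noteq> k" "j \<noteq> k" using card3_cases by blast
    have "det3 (x i) (x j) (x k) = 0"
      by (rule cl_vanish[OF x pf_det3]) (use S Sijk Y fd_triple in auto)
    then show ?thesis using Sijk fd_triple by simp
  qed (use fin fd_big in auto)
qed

lemma closure_in_circuit: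
  assumes "Y \<subseteq> circuit_variety d K"
  shows "zariski_closure d Y \<subseteq> circuit_variety d K"
proof
  fix x assume x: "x \<in> zariski_closure d Y"
  show "x \<in> circuit_variety d K" unfolding circuit_variety_def
  proof (intro CollectI conjI allI impI)
    show "x \<in> ambient d" using x cl_ambient by blast
    fix S assume "S \<subseteq> {1..d}" "K S"
    then show "fam_dependent x S"
      using fd_closed[OF x] assms unfolding circuit_variety_def by blast
  qed
qed

lemma real_in_circuit: "realizations d K \<subseteq> circuit_variety d K"
  unfolding realizations_def circuit_variety_def by blast

lemma fd_image:
  assumes "inj_on f S"
  shows "fam_dependent \<gamma> (f ` S) \<longleftrightarrow> fam_dependent (\<gamma> \<circ> f) S"
proof
  assume "fam_dependent \<gamma> (f ` S)"
  then obtain c where c: "\<exists>s\<in>f ` S. c s \<noteq> 0" "(\<Sum>s\<in>f ` S. c s *s \<gamma> s) = 0"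
    unfolding fam_dependent_def by blast
  have "(\<Sum>s\<in>S. (c \<circ> f) s *s (\<gamma> \<circ> f) s) = (\<Sum>s\<in>f ` S. c s *s \<gamma> s)"
    using sum.reindex[OF assms, of "\<lambda>s. c s *s \<gamma> s"] by simp
  then show "fam_dependent (\<gamma> \<circ> f) S" unfolding fam_dependent_def using c
    by (intro exI[of _ "c \<circ> f"]) auto
next
  assume "fam_dependent (\<gamma> \<circ> f) S"
  then obtain c where c: "\<exists>s\<in>S. c s \<noteq> 0" "(\<Sum>s\<in>S. c s *s (\<gamma> \<circ> f) s) = 0"
    unfolding fam_dependent_def by blast
  define c' where "c' = (\<lambda>y. c (the_inv_into S f y))"
  have cf: "c' (f s) = c s" if "s \<in> S" for s
    using the_inv_into_f_f[OF assms that] by (simp add: c'_def)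
  have "(\<Sum>s\<in>f ` S. c' s *s \<gamma> s) = (\<Sum>s\<in>S. c' (f s) *s \<gamma> (f s))"
    using sum.reindex[OF assms, of "\<lambda>s. c' s *s \<gamma> s"] by simp
  also have "\<dots> = (\<Sum>s\<in>S. c s *s (\<gamma> \<circ> f) s)" by (rule sum.cong) (auto simp: cf)
  finally show "fam_dependent \<gamma> (f ` S)" unfolding fam_dependent_def using c cf
    by (intro exI[of _ c']) auto
qed

lemma fd_scale:
  assumes "\<And>i. i \<in> S \<Longrightarrow> lam i \<noteq> 0"
  shows "fam_dependent (\<lambda>i. lam i *s v i) S \<longleftrightarrow> fam_dependent v S"
proof
  assume "fam_dependent (\<lambda>i. lam i *s v i) S"
  then obtain c where c: "\<exists>s\<in>S. c s \<noteq> 0" "(\<Sum>s\<in>S. c s *s (lam s *s v s)) = 0"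
    unfolding fam_dependent_def by blast
  then show "fam_dependent v S" unfolding fam_dependent_def using assms
    by (intro exI[of _ "\<lambda>s. c s * lam s"]) auto
next
  assume "fam_dependent v S"
  then obtain c where c: "\<exists>s\<in>S. c s \<noteq> 0" "(\<Sum>s\<in>S. c s *s v s) = 0"
    unfolding fam_dependent_def by blast
  have "(\<Sum>s\<in>S. (c s / lam s) *s (lam s *s v s)) = (\<Sum>s\<in>S. c s *s v s)"
    by (rule sum.cong) (auto simp: assms)
  then show "fam_dependent (\<lambda>i. lam i *s v i) S" unfolding fam_dependent_def using assms c
    by (intro exI[of _ "\<lambda>s. c s / lam s"]) auto
qed

lemma fd_quot:
  assumes fin: "finite S" and lam: "\<And>i. i \<in> S \<Longrightarrow> lam i \<noteq> 0"
  shows "fam_dependent (\<lambda>i. lam i *s w (q i)) S \<longleftrightarrow> (\<not> inj_on q S \<or> fam_dependent w (q ` S))"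
proof (cases "inj_on q S")
  case True
  have "fam_dependent (\<lambda>i. lam i *s w (q i)) S \<longleftrightarrow> fam_dependent (w \<circ> q) S"
    using fd_scale[of S lam "w \<circ> q"] lam by (simp add: o_def)
  also have "\<dots> \<longleftrightarrow> fam_dependent w (q ` S)" using fd_image[OF True] by simp
  finally show ?thesis using True by simp
next
  case False
  then obtain i j where ij: "i \<in> S" "j \<in> S" "i \<noteq> j" "q i = q j" unfolding inj_on_def by blast
  have "fam_dependent (\<lambda>i. lam i *s w (q i)) {i,j}"
    using ij by (simp add: fd_pair cr_zero)
  moreover have "{i,j} \<subseteq> S" using ij by auto
  ultimately have "fam_dependent (\<lambda>i. lam i *s w (q i)) S" using fd_mono[OF fin] by blast
  then show ?thesis using False by simp
qed

section \<open>Realizations of point-line configurations\<close>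

lemma plc_rank_le: "finite T \<Longrightarrow> plc_rank L T \<le> card T"
  unfolding plc_rank_def by auto

lemma plc_real:
  assumes fin: "finite E"
    and h3: "\<And>T. T \<subseteq> E \<Longrightarrow> card T = 3 \<Longrightarrow> (fam_dependent \<gamma> T \<longleftrightarrow> (\<exists>l\<in>L. T \<subseteq> l))"
    and h2: "\<And>T. T \<subseteq> E \<Longrightarrow> card T \<le> 2 \<Longrightarrow> \<exists>T'. T \<subseteq> T' \<and> T' \<subseteq> E \<and> card T' = 3 \<and> \<not> (\<exists>l\<in>L. T' \<subseteq> l)"
    and S: "S \<subseteq> E"
  shows "fam_dependent \<gamma> S \<longleftrightarrow> plc_rank L S < card S"
proof -
  have finS: "finite S" using S fin finite_subset by blast
  consider "card S \<le> 2" | "card S = 3" | "card S \<ge> 4" by linarith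
  then show ?thesis
  proof cases
    case 1
    obtain T' where T': "S \<subseteq> T'" "T' \<subseteq> E" "card T' = 3" "\<not> (\<exists>l\<in>L. T' \<subseteq> l)" using h2[OF S 1] by blast
    have "\<not> fam_dependent \<gamma> T'" using h3[OF T'(2) T'(3)] T'(4) by blast
    then have "\<not> fam_dependent \<gamma> S" using fd_mono[of T' S \<gamma>] T' fin finite_subset by blast
    moreover have "plc_rank L S = card S" using 1 by (simp add: plc_rank_def)
    ultimately show ?thesis by simp
  next
    case 2
    then show ?thesis using h3[OF S 2] by (simp add: plc_rank_def)
  next
    case 3
    then show ?thesis using fd_big[OF finS] by (simp add: plc_rank_def)
  qed
qed

lemma card3_sorted:
  assumes "card (T::nat set) = 3"
  shows "\<exists>i j k. T = {i,j,k} \<and> i < j \<and> j < k"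
proof -
  obtain a b c where abc: "T = {a,b,c}" "a \<noteq> b" "a \<noteq> c" "b \<noteq> c" using card3_cases[OF assms] by blast
  consider "a < b" "b < c" | "a < c" "c < b" | "b < a" "a < c" | "b < c" "c < a" | "c < a" "a < b" | "c < b" "b < a"
    using abc by linarith
  then show ?thesis
  proof cases
    case 1 then show ?thesis using abc by (intro exI[of _ a] exI[of _ b] exI[of _ c]) auto
  next
    case 2 then show ?thesis using abc by (intro exI[of _ a] exI[of _ c] exI[of _ b]) auto
  next
    case 3 then show ?thesis using abc by (intro exI[of _ b] exI[of _ a] exI[of _ c]) auto
  next
    case 4 then show ?thesis using abc by (intro exI[of _ b] exI[of _ c] exI[of _ a]) auto
  next
    case 5 then show ?thesis using abc by (intro exI[of _ c] exI[of _ a] exI[of _ b]) auto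
  next
    case 6 then show ?thesis using abc by (intro exI[of _ c] exI[of _ b] exI[of _ a]) auto
  qed
qed

lemma h3_from_sorted:
  assumes "\<And>i j k. i < j \<Longrightarrow> j < k \<Longrightarrow> {i,j,k} \<subseteq> E \<Longrightarrow>
             (det3 (\<gamma> i) (\<gamma> j) (\<gamma> k) = 0 \<longleftrightarrow> (\<exists>l\<in>L. {i,j,k} \<subseteq> l))"
    and "T \<subseteq> E" "card T = 3"
  shows "fam_dependent \<gamma> T \<longleftrightarrow> (\<exists>l\<in>L. T \<subseteq> l)"
proof -
  obtain i j k where T: "T = {i,j,k}" "(i::nat) < j" "j < k" using card3_sorted[OF assms(3)] by blast
  then show ?thesis using assms(1)[of i j k] assms(2) fd_triple[of i j k \<gamma>] by auto
qed

definition pcfg :: "nat \<Rightarrow> (nat \<Rightarrow> nat) \<Rightarrow> config \<Rightarrow> config" where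
  "pcfg d s \<gamma> = restrict (\<gamma> \<circ> s) {1..d}"

lemma pcfg_ambient: "pcfg d s \<gamma> \<in> ambient d"
  unfolding pcfg_def ambient_def by auto

lemma pcfg_poly:
  assumes "s ` {1..d} \<subseteq> {1..d}" "i \<in> {1..d}"
  shows "(\<lambda>\<gamma>. pcfg d s \<gamma> i $ j) \<in> poly_funs d"
  using assms by (simp add: pcfg_def pvar' image_subset_iff)

lemma pcfg_closure:
  assumes "s ` {1..d} \<subseteq> {1..d}" "\<And>y. y \<in> X \<Longrightarrow> pcfg d s y \<in> Y" "x \<in> zariski_closure d X"
  shows "pcfg d s x \<in> zariski_closure d Y"
  by (rule transfer_closure[where F = "pcfg d s"]) (use assms pcfg_ambient pcfg_poly in auto)


lemma fd_cong: "(\<And>i. i \<in> S \<Longrightarrow> \<gamma> i = \<gamma>' i) \<Longrightarrow> fam_dependent \<gamma> S \<longleftrightarrow> fam_dependent \<gamma>' S"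
  unfolding fam_dependent_def by (metis (no_types, lifting) sum.cong)

lemma pf1_vec:
  fixes j :: 3
  assumes "pf1 a" "pf1 b" "pf1 c"
  shows "pf1 (\<lambda>t. vector [a t, b t, c t] $ j)"
  using exhaust_3[of j] assms by auto

lemma pf1_if: "pf1 f \<Longrightarrow> pf1 g \<Longrightarrow> pf1 (\<lambda>t. if c then f t else g t)"
  by (cases c) auto

lemma pf1_det3:
  assumes "\<And>j. pf1 (\<lambda>t. u t $ j)" "\<And>j. pf1 (\<lambda>t. v t $ j)" "\<And>j. pf1 (\<lambda>t. w t $ j)"
  shows "pf1 (\<lambda>t. det3 (u t) (v t) (w t))"
  unfolding det3_def by (intro pf1_add pf1_diff pf1_mult assms)

lemma sorted_sub:
  assumes "(i::nat) < j" "j < k" "a < b" "b < c" "{i,j,k} \<subseteq> {a,b,c}"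
  shows "i = a \<and> j = b \<and> k = c"
  using assms by auto

section \<open>The Pappus family\<close>

definition papv :: "complex \<Rightarrow> complex \<Rightarrow> nat \<Rightarrow> complex^3" where
  "papv m s i = (if i = 1 then vector [1,0,0] else if i = 2 then vector [0,1,1]
     else if i = 3 then vector [1,s,s] else if i = 4 then vector [0,1,0]
     else if i = 5 then vector [m,0,1] else if i = 6 then vector [m * s,1,s]
     else if i = 7 then vector [0,0,1] else if i = 8 then vector [1,1,s]
     else vector [m * s, m * s, m * s+s-1])"

lemma E9: "{1..9::nat} = {1,2,3,4,5,6,7,8,9}" by auto

lemma pap_lines:
  "det3 (papv m s 1) (papv m s 2) (papv m s 3) = 0"
  "det3 (papv m s 1) (papv m s 6) (papv m s 8) = 0"
  "det3 (papv m s 7) (papv m s 8) (papv m s 9) = 0"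
  "det3 (papv m s 2) (papv m s 6) (papv m s 9) = 0"
  "det3 (papv m s 2) (papv m s 4) (papv m s 7) = 0"
  "det3 (papv m s 3) (papv m s 5) (papv m s 9) = 0"
  "det3 (papv m s 3) (papv m s 4) (papv m s 8) = 0"
  "det3 (papv m s 1) (papv m s 5) (papv m s 7) = 0"
  "det3 (papv m s 4) (papv m s 5) (papv m s 6) = 0"
  by (simp_all add: papv_def det3_def algebra_simps)

definition pw :: "nat \<Rightarrow> nat \<Rightarrow> nat" where
  "pw i j = (if i = 1 then (if j = 2 \<or> j = 3 then 4 else 2) else if i = 2 then (if j = 3 then 4 else 1)
     else if (i = 5 \<and> j = 7) \<or> (i = 6 \<and> j = 8) then 2 else 1)"

lemma pap_pairs:
  "\<forall>i\<in>{1..9::nat}. \<forall>j\<in>{1..9}. i < j \<longrightarrow> pw i j \<in> {1..9} \<and> pw i j \<noteq> i \<and> pw i j \<noteq> j \<and> \<not>(\<exists>l\<in>pappus_lines. {i,j,pw i j} \<subseteq> l)"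
  unfolding E9 apply (simp only: ball_simps(5,7))
  by (simp add: pw_def pappus_lines_def)

lemma pap_numeric:
  "\<forall>i\<in>{1..9::nat}. \<forall>j\<in>{1..9}. \<forall>k\<in>{1..9}. i < j \<longrightarrow> j < k \<longrightarrow> \<not>(\<exists>l\<in>pappus_lines. {i,j,k} \<subseteq> l)
    \<longrightarrow> det3 (papv 2 2 i) (papv 2 2 j) (papv 2 2 k) \<noteq> 0"
  unfolding E9 apply (simp only: ball_simps(5,7))
  by (simp add: pappus_lines_def papv_def det3_def)

lemma pap_pair_ext:
  assumes "a \<in> {1..9}" "b \<in> {1..9}" "(a::nat) < b"
  shows "\<exists>T'. {a,b} \<subseteq> T' \<and> T' \<subseteq> {1..9} \<and> card T' = 3 \<and> \<not> (\<exists>l\<in>pappus_lines. T' \<subseteq> l)"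
proof -
  have h: "pw a b \<in> {1..9} \<and> pw a b \<noteq> a \<and> pw a b \<noteq> b \<and> \<not>(\<exists>l\<in>pappus_lines. {a,b,pw a b} \<subseteq> l)"
    using pap_pairs assms by blast
  show ?thesis using h assms by (intro exI[of _ "{a,b,pw a b}"]) auto
qed

lemma pap_h2:
  assumes "T \<subseteq> {1..9::nat}" "card T \<le> 2"
  shows "\<exists>T'. T \<subseteq> T' \<and> T' \<subseteq> {1..9} \<and> card T' = 3 \<and> \<not> (\<exists>l\<in>pappus_lines. T' \<subseteq> l)"
proof -
  have fin: "finite T" using assms(1) finite_subset by blast
  consider "card T = 0" | "card T = 1" | "card T = 2" using assms(2) by linarith
  then show ?thesis
  proof cases
    case 1
    then have "T = {}" using fin by simp
    then show ?thesis using pap_pair_ext[of 1 2] by auto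
  next
    case 2
    then obtain i where i: "T = {i}" using card_1_singletonE by blast
    show ?thesis
    proof (cases "i = 1")
      case True then show ?thesis using pap_pair_ext[of 1 2] i by auto
    next
      case False
      then have "1 < i" "i \<in> {1..9}" using i assms(1) by auto
      then show ?thesis using pap_pair_ext[of 1 i] i by auto
    qed
  next
    case 3
    then obtain i j where ij: "T = {i,j}" "i \<noteq> j" using card2_cases by blast
    show ?thesis
    proof (cases "i < j")
      case True then show ?thesis using pap_pair_ext[of i j] ij assms(1) by auto
    next
      case False then have "j < i" using ij by simp
      then show ?thesis using pap_pair_ext[of j i] ij assms(1) by (auto simp: insert_commute)
    qed
  qed
qed

definition NLset :: "(nat \<times> nat \<times> nat) set" where
  "NLset = {(i,j,k). i < j \<and> j < k \<and> {i,j,k} \<subseteq> {1..9} \<and> \<not>(\<exists>l\<in>pappus_lines. {i,j,k} \<subseteq> l)}"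

lemma NLset_finite: "finite NLset"
proof -
  have "NLset \<subseteq> {1..9} \<times> {1..9} \<times> {1..9}"
  proof
    fix x assume "x \<in> NLset"
    then obtain i j k where "x = (i,j,k)" "{i,j,k} \<subseteq> {1..9::nat}" unfolding NLset_def by blast
    then show "x \<in> {1..9} \<times> {1..9} \<times> {1..9}" by simp
  qed
  then show ?thesis using finite_subset by blast
qed

definition gP :: "(nat \<Rightarrow> complex^3) \<Rightarrow> complex" where
  "gP \<gamma> = (\<Prod>x\<in>NLset. (case x of (i,j,k) \<Rightarrow> det3 (\<gamma> i) (\<gamma> j) (\<gamma> k)))"

lemma gP_nonzero:
  assumes "gP \<gamma> \<noteq> 0" "(i,j,k) \<in> NLset"
  shows "det3 (\<gamma> i) (\<gamma> j) (\<gamma> k) \<noteq> 0"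
  using assms NLset_finite unfolding gP_def by (auto simp: prod_zero_iff)

lemma gP_numeric: "gP (papv 2 2) \<noteq> 0"
  unfolding gP_def using NLset_finite pap_numeric
  by (subst prod_zero_iff) (auto simp: NLset_def)

definition pap :: "complex \<Rightarrow> complex \<Rightarrow> config" where
  "pap m s = restrict (papv m s) {1..9}"

lemma line_case:
  assumes "(i::nat) < j" "j < k" "a < b" "b < c" "{i,j,k} \<subseteq> {a,b,c}"
    "det3 (papv m s a) (papv m s b) (papv m s c) = 0"
  shows "det3 (papv m s i) (papv m s j) (papv m s k) = 0"
  using sorted_sub[OF assms(1-5)] assms(6) by simp

lemma pap_inline:
  assumes "i < j" "j < k" "l \<in> pappus_lines" "{i,j,k} \<subseteq> l"
  shows "det3 (papv m s i) (papv m s j) (papv m s k) = 0"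
  using assms(3) unfolding pappus_lines_def
  apply (elim insertE emptyE)
  apply (rule line_case[OF assms(1,2), of 1 2 3]; use assms(4) pap_lines(1) in simp)
  apply (rule line_case[OF assms(1,2), of 1 6 8]; use assms(4) pap_lines(2) in simp)
  apply (rule line_case[OF assms(1,2), of 7 8 9]; use assms(4) pap_lines(3) in simp)
  apply (rule line_case[OF assms(1,2), of 2 6 9]; use assms(4) pap_lines(4) in simp)
  apply (rule line_case[OF assms(1,2), of 2 4 7]; use assms(4) pap_lines(5) in simp)
  apply (rule line_case[OF assms(1,2), of 3 5 9]; use assms(4) pap_lines(6) in simp)
  apply (rule line_case[OF assms(1,2), of 3 4 8]; use assms(4) pap_lines(7) in simp)
  apply (rule line_case[OF assms(1,2), of 1 5 7]; use assms(4) pap_lines(8) in simp)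
  apply (rule line_case[OF assms(1,2), of 4 5 6]; use assms(4) pap_lines(9) in simp)
  done

lemma pap_real:
  assumes "gP (papv m s) \<noteq> 0"
  shows "pap m s \<in> realizations 9 MP_dep"
  unfolding realizations_def
proof (intro CollectI conjI allI impI)
  show "pap m s \<in> ambient 9" unfolding pap_def ambient_def by auto
  fix S assume S: "S \<subseteq> {1..9::nat}"
  have "fam_dependent (pap m s) S \<longleftrightarrow> fam_dependent (papv m s) S"
    by (rule fd_cong) (use S in \<open>auto simp: pap_def\<close>)
  also have "\<dots> \<longleftrightarrow> plc_rank pappus_lines S < card S"
  proof (rule plc_real[OF _ _ pap_h2 S])
    show "finite {1..9::nat}" by simp
    fix T assume T: "T \<subseteq> {1..9::nat}" "card T = 3"
    show "fam_dependent (papv m s) T \<longleftrightarrow> (\<exists>l\<in>pappus_lines. T \<subseteq> l)"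
    proof (rule h3_from_sorted[OF _ T])
      fix i j k assume ijk: "(i::nat) < j" "j < k" "{i,j,k} \<subseteq> {1..9}"
      show "det3 (papv m s i) (papv m s j) (papv m s k) = 0 \<longleftrightarrow> (\<exists>l\<in>pappus_lines. {i,j,k} \<subseteq> l)"
      proof
        assume d: "det3 (papv m s i) (papv m s j) (papv m s k) = 0"
        show "\<exists>l\<in>pappus_lines. {i,j,k} \<subseteq> l"
        proof (rule ccontr)
          assume "\<not> (\<exists>l\<in>pappus_lines. {i,j,k} \<subseteq> l)"
          then have "(i,j,k) \<in> NLset" using ijk unfolding NLset_def by auto
          then show False using gP_nonzero[OF assms] d by blast
        qed
      next
        assume "\<exists>l\<in>pappus_lines. {i,j,k} \<subseteq> l"
        then show "det3 (papv m s i) (papv m s j) (papv m s k) = 0" using pap_inline ijk by blast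
      qed
    qed
  qed
  finally show "fam_dependent (pap m s) S \<longleftrightarrow> MP_dep S" using S by (simp add: MP_dep_def)
qed

lemma pf1_papv:
  assumes "pf1 m" "pf1 s"
  shows "pf1 (\<lambda>t. papv (m t) (s t) i $ j)"
  unfolding papv_def if_distrib[of "\<lambda>v. v $ j"]
  by (intro pf1_if pf1_vec pf1_const pf1_mult pf1_add pf1_diff assms)

lemma pap0_closure: "pap m0 0 \<in> zariski_closure 9 (realizations 9 MP_dep)"
proof -
  define mt where "mt = (\<lambda>t::complex. m0 + t * (2 - m0))"
  define st where "st = (\<lambda>t::complex. 2 * t)"
  have pm: "pf1 mt" "pf1 st" unfolding mt_def st_def by (intro pf1_add pf1_mult pf1_const pf1_id pf1_diff)+
  have "pap (mt 0) (st 0) \<in> zariski_closure 9 (realizations 9 MP_dep)"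
  proof (rule curve_closure[where \<phi> = "\<lambda>t. pap (mt t) (st t)" and g = "\<lambda>t. gP (papv (mt t) (st t))" and tz = 1])
    show "pap (mt t) (st t) \<in> ambient 9" for t unfolding pap_def ambient_def by auto
    show "pf1 (\<lambda>t. pap (mt t) (st t) i $ j)" if "i \<in> {1..9}" for i j
      using that pf1_papv[OF pm] by (simp add: pap_def)
    show "pf1 (\<lambda>t. gP (papv (mt t) (st t)))"
      unfolding gP_def
      by (rule pf1_prod[OF NLset_finite]) (auto intro!: pf1_det3 pf1_papv[OF pm])
    show "gP (papv (mt 1) (st 1)) \<noteq> 0" using gP_numeric by (simp add: mt_def st_def)
    show "pap (mt t) (st t) \<in> realizations 9 MP_dep" if "gP (papv (mt t) (st t)) \<noteq> 0" for t
      using pap_real[OF that] .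
  qed
  then show ?thesis by (simp add: mt_def st_def)
qed


definition lin3 :: "complex^3 \<Rightarrow> complex^3 \<Rightarrow> complex^3 \<Rightarrow> complex^3 \<Rightarrow> complex^3" where
  "lin3 P Q R u = u$1 *s P + u$2 *s Q + u$3 *s R"

lemma lin3_add: "lin3 P Q R (u + v) = lin3 P Q R u + lin3 P Q R v"
  by (simp add: lin3_def vec3_eq algebra_simps)
lemma lin3_smult: "lin3 P Q R (c *s u) = c *s lin3 P Q R u"
  by (simp add: lin3_def vec3_eq algebra_simps)
lemma lin3_zero: "lin3 P Q R 0 = 0"
  by (simp add: lin3_def)

lemma lin3_sum: "lin3 P Q R (\<Sum>s\<in>S. c s *s y s) = (\<Sum>s\<in>S. c s *s lin3 P Q R (y s))"
proof (cases "finite S")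
  case True then show ?thesis
    by (induction S rule: finite_induct) (simp_all add: lin3_zero lin3_add lin3_smult)
next
  case False then show ?thesis by (simp add: lin3_zero)
qed

lemma lin3_inj:
  assumes "det3 P Q R \<noteq> 0" "lin3 P Q R u = 0"
  shows "u = 0"
proof -
  have "u$1 * det3 P Q R = 0" using det3_lin1[of "u$1" P "u$2" Q "u$3" R] assms(2)
    by (simp add: lin3_def det3_zero_left)
  moreover have "u$2 * det3 P Q R = 0" using det3_lin2[of P "u$1" "u$2" Q "u$3" R] assms(2)
    by (simp add: lin3_def det3_zero_mid)
  moreover have "u$3 * det3 P Q R = 0" using det3_lin3[of P Q "u$1" "u$2" "u$3" R] assms(2)
    by (simp add: lin3_def det3_zero_right)
  ultimately show ?thesis using assms(1) by (simp add: vec3_zero)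
qed

lemma fd_lin:
  assumes "det3 P Q R \<noteq> 0"
  shows "fam_dependent (\<lambda>i. lin3 P Q R (y i)) S \<longleftrightarrow> fam_dependent y S"
proof
  assume "fam_dependent (\<lambda>i. lin3 P Q R (y i)) S"
  then obtain c where c: "\<exists>s\<in>S. c s \<noteq> 0" "(\<Sum>s\<in>S. c s *s lin3 P Q R (y s)) = 0"
    unfolding fam_dependent_def by blast
  then have "lin3 P Q R (\<Sum>s\<in>S. c s *s y s) = 0" by (simp add: lin3_sum)
  then have "(\<Sum>s\<in>S. c s *s y s) = 0" using lin3_inj[OF assms] by blast
  then show "fam_dependent y S" using c unfolding fam_dependent_def by blast
next
  assume "fam_dependent y S"
  then obtain c where c: "\<exists>s\<in>S. c s \<noteq> 0" "(\<Sum>s\<in>S. c s *s y s) = 0"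
    unfolding fam_dependent_def by blast
  then have "(\<Sum>s\<in>S. c s *s lin3 P Q R (y s)) = 0" using lin3_sum[of P Q R c y S] by (simp add: lin3_zero)
  then show "fam_dependent (\<lambda>i. lin3 P Q R (y i)) S" using c unfolding fam_dependent_def by blast
qed

definition Lm :: "(nat \<Rightarrow> complex) \<Rightarrow> complex^3 \<Rightarrow> complex^3 \<Rightarrow> complex^3 \<Rightarrow> config \<Rightarrow> config" where
  "Lm k P Q R y = restrict (\<lambda>i. k i *s lin3 P Q R (y i)) {1..9}"

lemma Lm_real:
  assumes "det3 P Q R \<noteq> 0" "\<And>i. i \<in> {1..9} \<Longrightarrow> k i \<noteq> 0" "y \<in> realizations 9 K"
  shows "Lm k P Q R y \<in> realizations 9 K"
  unfolding realizations_def
proof (intro CollectI conjI allI impI)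
  show "Lm k P Q R y \<in> ambient 9" unfolding Lm_def ambient_def by auto
  fix S assume S: "S \<subseteq> {1..9::nat}"
  have "fam_dependent (Lm k P Q R y) S \<longleftrightarrow> fam_dependent (\<lambda>i. k i *s lin3 P Q R (y i)) S"
    by (rule fd_cong) (use S in \<open>auto simp: Lm_def\<close>)
  also have "\<dots> \<longleftrightarrow> fam_dependent (\<lambda>i. lin3 P Q R (y i)) S"
    by (rule fd_scale) (use S assms(2) in auto)
  also have "\<dots> \<longleftrightarrow> fam_dependent y S" by (rule fd_lin[OF assms(1)])
  also have "\<dots> \<longleftrightarrow> K S" using assms(3) S unfolding realizations_def by blast
  finally show "fam_dependent (Lm k P Q R y) S \<longleftrightarrow> K S" .
qed

lemma Lm_poly:
  assumes "i \<in> {1..9}"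
  shows "(\<lambda>y. Lm k P Q R y i $ j) \<in> poly_funs 9"
proof -
  have "(\<lambda>y. (\<lambda>_. k i) y * ((\<lambda>y. y i $ 1) y * (\<lambda>_. P$j) y + (\<lambda>y. y i $ 2) y * (\<lambda>_. Q$j) y
      + (\<lambda>y. y i $ 3) y * (\<lambda>_. R$j) y)) \<in> poly_funs 9"
    using assms by (intro pf_mult pf_add pf_const pvar')
  then show ?thesis using assms by (simp add: Lm_def lin3_def algebra_simps)
qed

lemma Lm_closure:
  assumes "det3 P Q R \<noteq> 0" "\<And>i. i \<in> {1..9} \<Longrightarrow> k i \<noteq> 0"
    "y \<in> zariski_closure 9 (realizations 9 K)"
  shows "Lm k P Q R y \<in> zariski_closure 9 (realizations 9 K)"
  by (rule transfer_closure[where F = "Lm k P Q R"])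
     (use assms Lm_real Lm_poly in \<open>auto simp: Lm_def ambient_def\<close>)

lemma cramer:
  assumes "det3 P Q R \<noteq> 0"
  shows "v = (det3 v Q R / det3 P Q R) *s P + (det3 P v R / det3 P Q R) *s Q + (det3 P Q v / det3 P Q R) *s R"
proof -
  let ?D = "det3 P Q R"
  have e: "?D *s v = det3 v Q R *s P + det3 P v R *s Q + det3 P Q v *s R"
    by (simp add: vec3_eq det3_def algebra_simps)
  have "v = (1 / ?D) *s (?D *s v)" using assms by simp
  also have "\<dots> = (det3 v Q R / ?D) *s P + (det3 P v R / ?D) *s Q + (det3 P Q v / ?D) *s R"
    unfolding e by (simp add: vector_add_ldistrib)
  finally show ?thesis .
qed

lemma det3_scale: "det3 (a *s u) (b *s v) (c *s w) = a * b * c * det3 u v w"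
  by (simp add: det3_def algebra_simps)

lemma Cdep_facts:
  "\<not> C_dep {1}" "\<not> C_dep {3}" "\<not> C_dep {4}" "\<not> C_dep {6}" "\<not> C_dep {7}" "\<not> C_dep {9}"
  "C_dep {1,3}" "C_dep {4,6}" "C_dep {7,9}"
  "\<not> C_dep {1,4,7}" "C_dep {1,4,8}" "\<not> C_dep {8,4,7}" "\<not> C_dep {1,8,7}"
  "C_dep {2,4,7}" "\<not> C_dep {1,2,7}" "\<not> C_dep {1,4,2}"
  "C_dep {1,5,7}" "\<not> C_dep {5,4,7}" "\<not> C_dep {1,4,5}"
  by (simp_all add: C_dep_def C_rank_def plc_rank_def quot_map_def P_lines_def)


lemma ambient_ext:
  assumes "f \<in> ambient d" "g \<in> ambient d" "\<And>i. i \<in> {1..d} \<Longrightarrow> f i = g i"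
  shows "f = g"
  using assms unfolding ambient_def by (metis PiE_ext)

lemma realC_clMP:
  assumes x: "x \<in> realizations 9 C_dep"
  shows "x \<in> zariski_closure 9 (realizations 9 MP_dep)"
proof -
  have fx: "fam_dependent x S \<longleftrightarrow> C_dep S" if "S \<subseteq> {1..9}" for S
    using x that unfolding realizations_def by blast
  have fx1: "fam_dependent x {i} \<longleftrightarrow> C_dep {i}" if "i \<in> {1..9}" for i using fx that by simp
  have fx2: "fam_dependent x {i,j} \<longleftrightarrow> C_dep {i,j}" if "i \<in> {1..9}" "j \<in> {1..9}" for i j
    using fx that by simp
  have fx3: "fam_dependent x {i,j,k} \<longleftrightarrow> C_dep {i,j,k}" if "i \<in> {1..9}" "j \<in> {1..9}" "k \<in> {1..9}" for i j k
    using fx that by simp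
  define A where "A = x 1"
  define B where "B = x 4"
  define Cc where "Cc = x 7"
  have nz: "x i \<noteq> 0" if "i \<in> {1,3,4,6,7,9}" for i
  proof -
    have "\<not> C_dep {i}" using that Cdep_facts by auto
    then show ?thesis using fx1[of i] that fd_single by auto
  qed
  have par: "\<exists>l. x j = l *s x i" if "C_dep {i,j}" "i \<noteq> j" "i \<in> {1..9}" "j \<in> {1..9}" "x i \<noteq> 0" for i j
    using fx2[of i j] that fd_pair[of i j x] parallel_of_cr by auto
  obtain l3 where l3: "x 3 = l3 *s A" using par[of 1 3] Cdep_facts nz[of 1] by (auto simp: A_def)
  obtain l6 where l6: "x 6 = l6 *s B" using par[of 4 6] Cdep_facts nz[of 4] by (auto simp: B_def)
  obtain l9 where l9: "x 9 = l9 *s Cc" using par[of 7 9] Cdep_facts nz[of 7] by (auto simp: Cc_def)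
  have l3nz: "l3 \<noteq> 0" using l3 nz[of 3] by auto
  have l6nz: "l6 \<noteq> 0" using l6 nz[of 6] by auto
  have l9nz: "l9 \<noteq> 0" using l9 nz[of 9] by auto
  have dz: "det3 (x i) (x j) (x k) = 0" if "C_dep {i,j,k}" "i \<noteq> j" "i \<noteq> k" "j \<noteq> k"
      "i \<in> {1..9}" "j \<in> {1..9}" "k \<in> {1..9}" for i j k
    using fx3[of i j k] that fd_triple[of i j k x] by auto
  have dnz: "det3 (x i) (x j) (x k) \<noteq> 0" if "\<not> C_dep {i,j,k}" "i \<noteq> j" "i \<noteq> k" "j \<noteq> k"
      "i \<in> {1..9}" "j \<in> {1..9}" "k \<in> {1..9}" for i j k
    using fx3[of i j k] that fd_triple[of i j k x] by auto
  define D where "D = det3 A B Cc"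
  have Dnz: "D \<noteq> 0" unfolding D_def A_def B_def Cc_def using dnz[of 1 4 7] Cdep_facts by simp
  define al where "al = det3 (x 8) B Cc / D"
  define be where "be = det3 A (x 8) Cc / D"
  define be2 where "be2 = det3 A (x 2) Cc / D"
  define ga2 where "ga2 = det3 A B (x 2) / D"
  define al5 where "al5 = det3 (x 5) B Cc / D"
  define ga5 where "ga5 = det3 A B (x 5) / D"
  have alnz: "al \<noteq> 0" unfolding al_def using Dnz dnz[of 8 4 7] Cdep_facts by (simp add: B_def Cc_def)
  have benz: "be \<noteq> 0" unfolding be_def using Dnz dnz[of 1 8 7] Cdep_facts by (simp add: A_def Cc_def)
  have be2nz: "be2 \<noteq> 0" unfolding be2_def using Dnz dnz[of 1 2 7] Cdep_facts by (simp add: A_def Cc_def)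
  have ga2nz: "ga2 \<noteq> 0" unfolding ga2_def using Dnz dnz[of 1 4 2] Cdep_facts by (simp add: A_def B_def)
  have ga5nz: "ga5 \<noteq> 0" unfolding ga5_def using Dnz dnz[of 1 4 5] Cdep_facts by (simp add: A_def B_def)
  have x8: "x 8 = al *s A + be *s B"
  proof -
    have z: "det3 A B (x 8) = 0" unfolding A_def B_def using dz[of 1 4 8] Cdep_facts by simp
    show ?thesis using cramer[of A B Cc "x 8"] Dnz z by (simp add: al_def be_def D_def)
  qed
  have x2: "x 2 = be2 *s B + ga2 *s Cc"
  proof -
    have z: "det3 (x 2) B Cc = 0" unfolding B_def Cc_def using dz[of 2 4 7] Cdep_facts by simp
    show ?thesis using cramer[of A B Cc "x 2"] Dnz z by (simp add: be2_def ga2_def D_def)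
  qed
  have x5: "x 5 = al5 *s A + ga5 *s Cc"
  proof -
    have z: "det3 A (x 5) Cc = 0" unfolding A_def Cc_def using dz[of 1 5 7] Cdep_facts by simp
    show ?thesis using cramer[of A B Cc "x 5"] Dnz z by (simp add: al5_def ga5_def D_def)
  qed
  define rho where "rho = be * ga2 / be2"
  have rhonz: "rho \<noteq> 0" unfolding rho_def using benz ga2nz be2nz by simp
  define P where "P = al *s A"
  define Q where "Q = be *s B"
  define R where "R = rho *s Cc"
  define m0 where "m0 = al5 * be * ga2 / (ga5 * al * be2)"
  define k where "k = (\<lambda>i::nat. if i = 1 then 1 / al else if i = 2 then be2 / be else if i = 3 then l3 / al
      else if i = 4 then 1 / be else if i = 5 then be2 * ga5 / (be * ga2) else if i = 6 then l6 / be
      else if i = 7 then 1 / rho else if i = 8 then 1 else - l9 / rho)"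
  have knz: "k i \<noteq> 0" for i
    unfolding k_def using alnz benz be2nz ga2nz ga5nz l3nz l6nz l9nz rhonz by auto
  have PQR: "det3 P Q R \<noteq> 0" unfolding P_def Q_def R_def det3_scale
    using alnz benz rhonz Dnz by (simp add: D_def)
  have eq: "x i = k i *s lin3 P Q R (papv m0 0 i)" if "i \<in> {1..9}" for i
  proof -
    have "i = 1 \<or> i = 2 \<or> i = 3 \<or> i = 4 \<or> i = 5 \<or> i = 6 \<or> i = 7 \<or> i = 8 \<or> i = 9" using that by auto
    then show ?thesis
    proof (elim disjE)
      assume "i = 1" then show ?thesis using alnz
        by (simp add: k_def lin3_def papv_def P_def A_def)
    next
      assume "i = 2" then show ?thesis using benz be2nz
        by (simp add: k_def lin3_def papv_def Q_def R_def x2 rho_def vec3_eq field_simps)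
    next
      assume "i = 3" then show ?thesis using alnz
        by (simp add: k_def lin3_def papv_def P_def l3)
    next
      assume "i = 4" then show ?thesis using benz
        by (simp add: k_def lin3_def papv_def Q_def B_def)
    next
      assume "i = 5" then show ?thesis using alnz benz be2nz ga2nz ga5nz
        by (simp add: k_def lin3_def papv_def P_def R_def x5 rho_def m0_def vec3_eq field_simps)
    next
      assume "i = 6" then show ?thesis using benz
        by (simp add: k_def lin3_def papv_def Q_def l6)
    next
      assume "i = 7" then show ?thesis using rhonz
        by (simp add: k_def lin3_def papv_def R_def Cc_def)
    next
      assume "i = 8" then show ?thesis
        by (simp add: k_def lin3_def papv_def P_def Q_def x8)
    next
      assume "i = 9" then show ?thesis using rhonz
        by (simp add: k_def lin3_def papv_def R_def l9 vec3_eq field_simps)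
    qed
  qed
  have xeq: "x = Lm k P Q R (pap m0 0)"
  proof (rule ambient_ext)
    show "x \<in> ambient 9" using x unfolding realizations_def by blast
    show "Lm k P Q R (pap m0 0) \<in> ambient 9" unfolding Lm_def ambient_def by auto
    fix i assume "i \<in> {1..9::nat}"
    then show "x i = Lm k P Q R (pap m0 0) i" using eq by (simp add: Lm_def pap_def)
  qed
  show ?thesis unfolding xeq
    by (rule Lm_closure[OF PQR knz pap0_closure])
qed


section \<open>The six-point configuration P\<close>

lemma E6_eq: "{1,2,4,5,7,8::nat} = {1,2,4,5,7,8}" by simp

lemma P_lines_sorted: "P_lines = {{1,4,8},{2,4,7},{1,5,7}}"
  unfolding P_lines_def by (simp add: insert_commute)

definition Wc :: "config \<Rightarrow> bool" where
  "Wc w \<longleftrightarrow> det3 (w 1) (w 4) (w 8) = 0 \<and> det3 (w 2) (w 4) (w 7) = 0 \<and> det3 (w 1) (w 5) (w 7) = 0"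

definition NL6 :: "(nat \<times> nat \<times> nat) set" where
  "NL6 = {(i,j,k). i < j \<and> j < k \<and> {i,j,k} \<subseteq> {1,2,4,5,7,8} \<and> \<not>(\<exists>l\<in>P_lines. {i,j,k} \<subseteq> l)}"

lemma NL6_finite: "finite NL6"
proof -
  have "NL6 \<subseteq> {1,2,4,5,7,8} \<times> {1,2,4,5,7,8} \<times> {1,2,4,5,7,8}"
  proof
    fix x assume "x \<in> NL6"
    then obtain i j k where "x = (i,j,k)" "{i,j,k} \<subseteq> {1,2,4,5,7,8::nat}" unfolding NL6_def by blast
    then show "x \<in> {1,2,4,5,7,8} \<times> {1,2,4,5,7,8} \<times> {1,2,4,5,7,8}" by blast
  qed
  then show ?thesis using finite_subset by blast
qed

definition gC :: "config \<Rightarrow> complex" where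
  "gC \<gamma> = (\<Prod>x\<in>NL6. (case x of (i,j,k) \<Rightarrow> det3 (\<gamma> i) (\<gamma> j) (\<gamma> k)))"

lemma gC_nonzero:
  assumes "gC \<gamma> \<noteq> 0" "(i,j,k) \<in> NL6"
  shows "det3 (\<gamma> i) (\<gamma> j) (\<gamma> k) \<noteq> 0"
  using assms NL6_finite unfolding gC_def by (auto simp: prod_zero_iff)

lemma gC_intro:
  assumes "\<And>i j k. (i,j,k) \<in> NL6 \<Longrightarrow> det3 (\<gamma> i) (\<gamma> j) (\<gamma> k) \<noteq> 0"
  shows "gC \<gamma> \<noteq> 0"
  using assms NL6_finite unfolding gC_def by (subst prod_zero_iff) auto

definition pw6 :: "nat \<Rightarrow> nat \<Rightarrow> nat" where
  "pw6 i j = (if i = 1 then (if j = 2 then 4 else 2) else if (i = 4 \<and> j = 8) \<or> (i = 5 \<and> j = 7) then 2 else 1)"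

lemma P_pairs:
  "\<forall>i\<in>{1,2,4,5,7,8::nat}. \<forall>j\<in>{1,2,4,5,7,8}. i < j \<longrightarrow>
     pw6 i j \<in> {1,2,4,5,7,8} \<and> pw6 i j \<noteq> i \<and> pw6 i j \<noteq> j \<and> \<not>(\<exists>l\<in>P_lines. {i,j,pw6 i j} \<subseteq> l)"
  apply (simp only: ball_simps(5,7))
  by (simp add: P_lines_sorted pw6_def)

lemma P_pair_ext:
  assumes "a \<in> {1,2,4,5,7,8}" "b \<in> {1,2,4,5,7,8}" "(a::nat) < b"
  shows "\<exists>T'. {a,b} \<subseteq> T' \<and> T' \<subseteq> {1,2,4,5,7,8} \<and> card T' = 3 \<and> \<not> (\<exists>l\<in>P_lines. T' \<subseteq> l)"
proof -
  have k: "pw6 a b \<in> {1,2,4,5,7,8} \<and> pw6 a b \<noteq> a \<and> pw6 a b \<noteq> b \<and> \<not>(\<exists>l\<in>P_lines. {a,b,pw6 a b} \<subseteq> l)"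
    using P_pairs assms by blast
  show ?thesis using k assms by (intro exI[of _ "{a,b,pw6 a b}"]) auto
qed

lemma P_h2:
  assumes "T \<subseteq> {1,2,4,5,7,8::nat}" "card T \<le> 2"
  shows "\<exists>T'. T \<subseteq> T' \<and> T' \<subseteq> {1,2,4,5,7,8} \<and> card T' = 3 \<and> \<not> (\<exists>l\<in>P_lines. T' \<subseteq> l)"
proof -
  have fin: "finite T" using assms(1) finite_subset by blast
  consider "card T = 0" | "card T = 1" | "card T = 2" using assms(2) by linarith
  then show ?thesis
  proof cases
    case 1
    then have "T = {}" using fin by simp
    then show ?thesis using P_pair_ext[of 1 2] by auto
  next
    case 2
    then obtain i where i: "T = {i}" using card_1_singletonE by blast
    show ?thesis
    proof (cases "i = 1")
      case True then show ?thesis using P_pair_ext[of 1 2] i by auto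
    next
      case False
      then have "1 < i" "i \<in> {1,2,4,5,7,8}" using i assms(1) by auto
      then show ?thesis using P_pair_ext[of 1 i] i by auto
    qed
  next
    case 3
    then obtain i j where ij: "T = {i,j}" "i \<noteq> j" using card2_cases by blast
    show ?thesis
    proof (cases "i < j")
      case True then show ?thesis using P_pair_ext[of i j] ij assms(1) by auto
    next
      case False then have "j < i" using ij by simp
      then show ?thesis using P_pair_ext[of j i] ij assms(1) by (auto simp: insert_commute)
    qed
  qed
qed

lemma Wline_case:
  assumes "(i::nat) < j" "j < k" "a < b" "b < c" "{i,j,k} \<subseteq> {a,b,c}"
    "det3 (w a) (w b) (w c) = 0"
  shows "det3 (w i) (w j) (w k) = 0"
  using sorted_sub[OF assms(1-5)] assms(6) by simp

lemma P_inline: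
  assumes "(i::nat) < j" "j < k" "l \<in> P_lines" "{i,j,k} \<subseteq> l" "Wc w"
  shows "det3 (w i) (w j) (w k) = 0"
proof -
  have W: "det3 (w 1) (w 4) (w 8) = 0" "det3 (w 2) (w 4) (w 7) = 0" "det3 (w 1) (w 5) (w 7) = 0"
    using assms(5) unfolding Wc_def by auto
  show ?thesis using assms(3) unfolding P_lines_sorted
    apply (elim insertE emptyE)
      apply (rule Wline_case[OF assms(1,2), of 1 4 8]; use assms(4) W(1) in simp)
     apply (rule Wline_case[OF assms(1,2), of 2 4 7]; use assms(4) W(2) in simp)
    apply (rule Wline_case[OF assms(1,2), of 1 5 7]; use assms(4) W(3) in simp)
    done
qed

lemma w_realP:
  assumes "Wc w" "gC w \<noteq> 0" "T \<subseteq> {1,2,4,5,7,8}"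
  shows "fam_dependent w T \<longleftrightarrow> plc_rank P_lines T < card T"
proof (rule plc_real[OF _ _ P_h2 assms(3)])
  show "finite {1,2,4,5,7,8::nat}" by simp
  fix T assume T: "T \<subseteq> {1,2,4,5,7,8::nat}" "card T = 3"
  show "fam_dependent w T \<longleftrightarrow> (\<exists>l\<in>P_lines. T \<subseteq> l)"
  proof (rule h3_from_sorted[OF _ T])
    fix i j k assume ijk: "(i::nat) < j" "j < k" "{i,j,k} \<subseteq> {1,2,4,5,7,8}"
    show "det3 (w i) (w j) (w k) = 0 \<longleftrightarrow> (\<exists>l\<in>P_lines. {i,j,k} \<subseteq> l)"
    proof
      assume d: "det3 (w i) (w j) (w k) = 0"
      show "\<exists>l\<in>P_lines. {i,j,k} \<subseteq> l"
      proof (rule ccontr)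
        assume "\<not> (\<exists>l\<in>P_lines. {i,j,k} \<subseteq> l)"
        then have "(i,j,k) \<in> NL6" using ijk unfolding NL6_def by auto
        then show False using gC_nonzero[OF assms(2)] d by blast
      qed
    next
      assume "\<exists>l\<in>P_lines. {i,j,k} \<subseteq> l"
      then show "det3 (w i) (w j) (w k) = 0" using P_inline ijk assms(1) by blast
    qed
  qed
qed

section \<open>From six points to nine\<close>

definition psi :: "(nat \<Rightarrow> complex) \<Rightarrow> config \<Rightarrow> config" where
  "psi lam w = restrict (\<lambda>i. lam i *s w (quot_map i)) {1..9}"

lemma quot_range: "i \<in> {1..9} \<Longrightarrow> quot_map i \<in> {1,2,4,5,7,8}"
  unfolding quot_map_def by auto

lemma quot_range8: "i \<in> {1..9} \<Longrightarrow> quot_map i \<in> {1..8}"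
  using quot_range by fastforce

lemma psi_realC:
  assumes W: "Wc w" "gC w \<noteq> 0" and lam: "\<And>i. i \<in> {1..9} \<Longrightarrow> lam i \<noteq> 0"
  shows "psi lam w \<in> realizations 9 C_dep"
  unfolding realizations_def
proof (intro CollectI conjI allI impI)
  show "psi lam w \<in> ambient 9" unfolding psi_def ambient_def by auto
  fix S assume S: "S \<subseteq> {1..9::nat}"
  have fin: "finite S" using S finite_subset by blast
  have img: "quot_map ` S \<subseteq> {1,2,4,5,7,8}" using S quot_range by blast
  have finimg: "finite (quot_map ` S)" using fin by simp
  have "fam_dependent (psi lam w) S \<longleftrightarrow> fam_dependent (\<lambda>i. lam i *s w (quot_map i)) S"
    by (rule fd_cong) (use S in \<open>auto simp: psi_def\<close>)
  also have "\<dots> \<longleftrightarrow> (\<not> inj_on quot_map S \<or> fam_dependent w (quot_map ` S))"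
    by (rule fd_quot[OF fin]) (use S lam in auto)
  also have "\<dots> \<longleftrightarrow> (\<not> inj_on quot_map S \<or> plc_rank P_lines (quot_map ` S) < card (quot_map ` S))"
    using w_realP[OF W img] by simp
  also have "\<dots> \<longleftrightarrow> plc_rank P_lines (quot_map ` S) < card S"
  proof (cases "inj_on quot_map S")
    case True then show ?thesis by (simp add: card_image)
  next
    case False
    have "card (quot_map ` S) \<noteq> card S" using False eq_card_imp_inj_on[OF fin] by blast
    then have "card (quot_map ` S) < card S" using card_image_le[OF fin, of quot_map] by simp
    moreover have "plc_rank P_lines (quot_map ` S) \<le> card (quot_map ` S)" by (rule plc_rank_le[OF finimg])
    ultimately show ?thesis using False by simp
  qed
  also have "\<dots> \<longleftrightarrow> C_dep S" using S by (simp add: C_dep_def C_rank_def)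
  finally show "fam_dependent (psi lam w) S \<longleftrightarrow> C_dep S" .
qed

lemma psi_poly:
  assumes "i \<in> {1..9}"
  shows "(\<lambda>w. psi lam w i $ j) \<in> poly_funs 8"
proof -
  have "(\<lambda>w. (\<lambda>_. lam i) w * (\<lambda>w. w (quot_map i) $ j) w) \<in> poly_funs 8"
    using assms quot_range8 by (intro pf_mult pf_const pvar') auto
  then show ?thesis using assms by (simp add: psi_def)
qed

definition Good8 :: "config set" where
  "Good8 = {w \<in> ambient 8. Wc w \<and> gC w \<noteq> 0}"

lemma Good_to_clC:
  assumes "w \<in> Good8"
  shows "psi lam w \<in> zariski_closure 9 (realizations 9 C_dep)"
proof -
  define lt where "lt = (\<lambda>t::complex. \<lambda>i. lam i + t * (1 - lam i))"
  have "psi (lt 0) w \<in> zariski_closure 9 (realizations 9 C_dep)"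
  proof (rule curve_closure[where \<phi> = "\<lambda>t. psi (lt t) w" and g = "\<lambda>t. \<Prod>i\<in>{1..9}. lt t i" and tz = 1])
    show "psi (lt t) w \<in> ambient 9" for t unfolding psi_def ambient_def by auto
    show "pf1 (\<lambda>t. psi (lt t) w i $ j)" if "i \<in> {1..9}" for i j
      using that by (auto simp: psi_def lt_def intro!: pf1_mult pf1_add pf1_diff pf1_const pf1_id)
    show "pf1 (\<lambda>t. \<Prod>i\<in>{1..9}. lt t i)"
      by (rule pf1_prod) (auto simp: lt_def intro!: pf1_mult pf1_add pf1_diff pf1_const pf1_id)
    show "(\<Prod>i\<in>{1..9}. lt 1 i) \<noteq> 0" by (simp add: lt_def)
    show "psi (lt t) w \<in> realizations 9 C_dep" if "(\<Prod>i\<in>{1..9}. lt t i) \<noteq> 0" for t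
      using assms that by (intro psi_realC) (auto simp: Good8_def prod_zero_iff)
  qed
  then show ?thesis by (simp add: lt_def)
qed

lemma clGood_to_clC:
  assumes "w \<in> zariski_closure 8 Good8"
  shows "psi lam w \<in> zariski_closure 9 (realizations 9 C_dep)"
proof -
  have "psi lam w \<in> zariski_closure 9 (zariski_closure 9 (realizations 9 C_dep))"
    by (rule transfer_closure[where F = "psi lam" and X = Good8])
       (use assms Good_to_clC psi_poly in \<open>auto simp: psi_def ambient_def\<close>)
  then show ?thesis using cl_trans[of "zariski_closure 9 (realizations 9 C_dep)" 9 "realizations 9 C_dep"]
    by blast
qed


section \<open>Updating configurations along curves\<close>

definition upd :: "config \<Rightarrow> complex^3 \<Rightarrow> complex^3 \<Rightarrow> complex^3 \<Rightarrow> complex^3 \<Rightarrow> complex^3 \<Rightarrow> complex^3 \<Rightarrow> config" where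
  "upd w a b c p8 p2 p5 = restrict (\<lambda>i. if i = 1 then a else if i = 2 then p2 else if i = 4 then b
      else if i = 5 then p5 else if i = 7 then c else if i = 8 then p8 else w i) {1..8}"

lemma upd_simps:
  "upd w a b c p8 p2 p5 1 = a" "upd w a b c p8 p2 p5 2 = p2" "upd w a b c p8 p2 p5 4 = b"
  "upd w a b c p8 p2 p5 5 = p5" "upd w a b c p8 p2 p5 7 = c" "upd w a b c p8 p2 p5 8 = p8"
  by (simp_all add: upd_def)

lemma upd_ambient: "upd w a b c p8 p2 p5 \<in> ambient 8"
  unfolding upd_def ambient_def by auto

lemma Wc_upd: "Wc (upd w a b c p8 p2 p5) \<longleftrightarrow> det3 a b p8 = 0 \<and> det3 p2 b c = 0 \<and> det3 a p5 c = 0"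
  by (simp add: Wc_def upd_def)

lemma upd_self: "w \<in> ambient 8 \<Longrightarrow> upd w (w 1) (w 4) (w 7) (w 8) (w 2) (w 5) = w"
  by (rule ambient_ext[OF upd_ambient]) (auto simp: upd_def)

lemma upd_pf1:
  assumes pa: "\<And>j. pf1 (\<lambda>t. fa t $ j)" and pb: "\<And>j. pf1 (\<lambda>t. fb t $ j)" and pc: "\<And>j. pf1 (\<lambda>t. fc t $ j)"
    and p8: "\<And>j. pf1 (\<lambda>t. fx t $ j)" and p2: "\<And>j. pf1 (\<lambda>t. fy t $ j)" and p5: "\<And>j. pf1 (\<lambda>t. fz t $ j)"
  shows "pf1 (\<lambda>t. upd w (fa t) (fb t) (fc t) (fx t) (fy t) (fz t) i $ j)"
  unfolding upd_def restrict_def if_distrib[of "\<lambda>v. v $ j"]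
  by (intro pf1_if pa pb pc p8 p2 p5 pf1_const)

lemma upd_curve:
  assumes w: "w \<in> ambient 8"
    and pa: "\<And>j. pf1 (\<lambda>t. fa t $ j)" and pb: "\<And>j. pf1 (\<lambda>t. fb t $ j)" and pc: "\<And>j. pf1 (\<lambda>t. fc t $ j)"
    and p8: "\<And>j. pf1 (\<lambda>t. fx t $ j)" and p2: "\<And>j. pf1 (\<lambda>t. fy t $ j)" and p5: "\<And>j. pf1 (\<lambda>t. fz t $ j)"
    and z: "fa 0 = w 1" "fb 0 = w 4" "fc 0 = w 7" "fx 0 = w 8" "fy 0 = w 2" "fz 0 = w 5"
    and pg: "pf1 g" and gz: "g tz \<noteq> 0"
    and inY: "\<And>t. g t \<noteq> 0 \<Longrightarrow> upd w (fa t) (fb t) (fc t) (fx t) (fy t) (fz t) \<in> Y"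
  shows "w \<in> zariski_closure 8 Y"
proof -
  have "upd w (fa 0) (fb 0) (fc 0) (fx 0) (fy 0) (fz 0) \<in> zariski_closure 8 Y"
  proof (rule curve_closure[where \<phi> = "\<lambda>t. upd w (fa t) (fb t) (fc t) (fx t) (fy t) (fz t)" and g = g and tz = tz])
    show "upd w (fa t) (fb t) (fc t) (fx t) (fy t) (fz t) \<in> ambient 8" for t by (rule upd_ambient)
    show "pf1 (\<lambda>t. upd w (fa t) (fb t) (fc t) (fx t) (fy t) (fz t) i $ j)" if "i \<in> {1..8}" for i j
      by (rule upd_pf1[OF pa pb pc p8 p2 p5])
  qed (use pg gz inY in auto)
  then show ?thesis using z upd_self[OF w] by simp
qed

lemma det3_basis:
  "det3 u v (vector [1,0,0]) = cr u v $ 1" "det3 u v (vector [0,1,0]) = cr u v $ 2"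
  "det3 u v (vector [0,0,1]) = cr u v $ 3"
  by (simp_all add: det3_def cr_comp algebra_simps)

lemma cr_nonzero_det: "cr u v \<noteq> 0 \<Longrightarrow> \<exists>z. det3 u v z \<noteq> 0"
  using det3_basis[of u v] by (metis vec3_zero)

lemma det3_cyc: "det3 u v w = det3 v w u" by (simp add: det3_def algebra_simps)
lemma det3_swap12: "det3 u v w = - det3 v u w" by (simp add: det3_def algebra_simps)
lemma det3_swap13: "det3 u v w = - det3 w v u" by (simp add: det3_def algebra_simps)
lemma det3_swap23: "det3 u v w = - det3 u w v" by (simp add: det3_def algebra_simps)

lemma span2:
  assumes "cr u v \<noteq> 0" "det3 p u v = 0"
  shows "\<exists>\<beta> \<gamma>. p = \<beta> *s u + \<gamma> *s v"
proof -
  obtain z where z: "det3 u v z \<noteq> 0" using cr_nonzero_det[OF assms(1)] by blast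
  have "det3 u v p = 0" using assms(2) det3_cyc[of p u v] by simp
  then have "p = (det3 p v z / det3 u v z) *s u + (det3 u p z / det3 u v z) *s v"
    using cramer[OF z, of p] by simp
  then show ?thesis by blast
qed

lemma cr_swap: "cr v u = - cr u v" by (simp add: vec3_eq cr_comp)
lemma cr_self: "cr u u = 0" by (simp add: vec3_eq cr_comp algebra_simps)
lemma cr_smult_left: "cr (k *s u) v = k *s cr u v" by (simp add: vec3_eq cr_comp algebra_simps)
lemma cr_smult_right: "cr u (k *s v) = k *s cr u v" by (simp add: vec3_eq cr_comp algebra_simps)
lemma cr_add_right: "cr u (v + z) = cr u v + cr u z" by (simp add: vec3_eq cr_comp algebra_simps)
lemma cr_add_left: "cr (v + z) u = cr v u + cr z u" by (simp add: vec3_eq cr_comp algebra_simps)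

lemma par_nz:
  assumes "u \<noteq> 0" "v \<noteq> 0" "cr u v = 0"
  shows "\<exists>k. k \<noteq> 0 \<and> v = k *s u"
proof -
  obtain k where "v = k *s u" using parallel_of_cr assms by blast
  moreover have "k \<noteq> 0" using assms(2) calculation by auto
  ultimately show ?thesis by blast
qed

lemma nz_comp: "(x::complex^3) \<noteq> 0 \<Longrightarrow> \<exists>j. x $ j \<noteq> 0" by (simp add: vec_eq_iff)

section \<open>Strata\<close>

definition W8 :: "config set" where "W8 = {w \<in> ambient 8. Wc w}"
definition SA :: "config set" where "SA = {w \<in> W8. det3 (w 1) (w 4) (w 7) \<noteq> 0}"
definition SB :: "config set" where
  "SB = {w \<in> W8. cr (w 1) (w 4) \<noteq> 0 \<and> cr (w 4) (w 7) \<noteq> 0 \<and> cr (w 1) (w 7) \<noteq> 0}"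

definition nv :: "nat \<Rightarrow> complex^3" where
  "nv i = (if i = 1 then vector [1,0,0] else if i = 4 then vector [0,1,0] else if i = 7 then vector [0,0,1]
     else if i = 8 then vector [1,2,0] else if i = 2 then vector [0,1,2] else vector [2,0,1])"

lemma nv_numeric:
  "\<forall>i\<in>{1,2,4,5,7,8::nat}. \<forall>j\<in>{1,2,4,5,7,8}. \<forall>k\<in>{1,2,4,5,7,8}. i < j \<longrightarrow> j < k \<longrightarrow>
     \<not>(\<exists>l\<in>P_lines. {i,j,k} \<subseteq> l) \<longrightarrow> det3 (nv i) (nv j) (nv k) \<noteq> 0"
  apply (simp only: ball_simps(5,7))
  by (simp add: P_lines_sorted nv_def det3_def)

lemma det3_lin3_mult: "det3 (lin3 P Q R u) (lin3 P Q R v) (lin3 P Q R w) = det3 u v w * det3 P Q R"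
  by (simp add: lin3_def det3_def algebra_simps)

lemma det3_lerp1: "det3 (x + t *s (y - x)) v w = det3 x v w + t * (det3 y v w - det3 x v w)"
  by (simp add: det3_def algebra_simps)
lemma det3_lerp2: "det3 u (x + t *s (y - x)) w = det3 u x w + t * (det3 u y w - det3 u x w)"
  by (simp add: det3_def algebra_simps)
lemma det3_lerp3: "det3 u v (x + t *s (y - x)) = det3 u v x + t * (det3 u v y - det3 u v x)"
  by (simp add: det3_def algebra_simps)

lemma pf1_lerp: "pf1 (\<lambda>t. (x + t *s (y - x)) $ j)"
  by (simp, intro pf1_add pf1_mult pf1_const pf1_id pf1_diff)

lemma pf1_cv: "pf1 (\<lambda>t. (x::complex^3) $ j)" by (rule pf1_const)

lemma SA_Good: "w \<in> SA \<Longrightarrow> w \<in> zariski_closure 8 Good8"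
proof -
  assume "w \<in> SA"
  then have w: "w \<in> ambient 8" "Wc w" and D: "det3 (w 1) (w 4) (w 7) \<noteq> 0"
    unfolding SA_def W8_def by auto
  define a where "a = w 1"
  define b where "b = w 4"
  define c where "c = w 7"
  have W: "det3 a b (w 8) = 0" "det3 (w 2) b c = 0" "det3 a (w 5) c = 0"
    using w(2) unfolding Wc_def a_def b_def c_def by auto
  define e8 where "e8 = a + 2 *s b"
  define e2 where "e2 = b + 2 *s c"
  define e5 where "e5 = c + 2 *s a"
  let ?f8 = "\<lambda>t. w 8 + t *s (e8 - w 8)"
  let ?f2 = "\<lambda>t. w 2 + t *s (e2 - w 2)"
  let ?f5 = "\<lambda>t. w 5 + t *s (e5 - w 5)"
  let ?c = "\<lambda>t. upd w a b c (?f8 t) (?f2 t) (?f5 t)"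
  show ?thesis
  proof (rule upd_curve[OF w(1), where fa = "\<lambda>_. a" and fb = "\<lambda>_. b" and fc = "\<lambda>_. c"
        and fx = ?f8 and fy = ?f2 and fz = ?f5 and g = "\<lambda>t. gC (?c t)" and tz = 1])
    show "pf1 (\<lambda>t. gC (?c t))"
      unfolding gC_def
      by (rule pf1_prod[OF NL6_finite])
         (auto intro!: pf1_det3 upd_pf1 pf1_add pf1_mult pf1_diff pf1_const pf1_id)
    have endp: "?c 1 i = lin3 a b c (nv i)" if "i \<in> {1,2,4,5,7,8}" for i
      using that by (auto simp: upd_def lin3_def nv_def e8_def e2_def e5_def)
    show "gC (?c 1) \<noteq> 0"
    proof (rule gC_intro)
      fix i j k assume ijk: "(i,j,k) \<in> NL6"
      then have m: "i \<in> {1,2,4,5,7,8}" "j \<in> {1,2,4,5,7,8}" "k \<in> {1,2,4,5,7,8}" "i < j" "j < k"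
          "\<not>(\<exists>l\<in>P_lines. {i,j,k} \<subseteq> l)"
        unfolding NL6_def by blast+
      have "det3 (nv i) (nv j) (nv k) \<noteq> 0" using nv_numeric[rule_format, OF m(1) m(2) m(3) m(4) m(5) m(6)] .
      then show "det3 (?c 1 i) (?c 1 j) (?c 1 k) \<noteq> 0"
        using endp[OF m(1)] endp[OF m(2)] endp[OF m(3)] det3_lin3_mult D
        by (simp add: a_def b_def c_def)
    qed
    show "?c t \<in> Good8" if "gC (?c t) \<noteq> 0" for t
    proof -
      have "Wc (?c t)" unfolding Wc_upd det3_lerp1 det3_lerp2 det3_lerp3 using W
        by (simp add: e8_def e2_def e5_def det3_def algebra_simps)
      then show ?thesis using that upd_ambient unfolding Good8_def by blast
    qed
  qed (auto simp: a_def b_def c_def intro!: pf1_add pf1_mult pf1_diff pf1_const pf1_id)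
qed


lemma cl_step: "w \<in> zariski_closure d X \<Longrightarrow> X \<subseteq> zariski_closure d Y \<Longrightarrow> w \<in> zariski_closure d Y"
  using cl_trans by blast

lemma W8_facts:
  assumes "w \<in> W8"
  shows "w \<in> ambient 8" "det3 (w 1) (w 4) (w 8) = 0" "det3 (w 2) (w 4) (w 7) = 0" "det3 (w 1) (w 5) (w 7) = 0"
  using assms unfolding W8_def Wc_def by auto

lemma upd_W8: "Wc (upd w a b c p8 p2 p5) \<Longrightarrow> upd w a b c p8 p2 p5 \<in> W8"
  unfolding W8_def using upd_ambient by blast

lemma upd_vals: "upd w a b c p8 p2 p5 1 = a \<and> upd w a b c p8 p2 p5 4 = b \<and> upd w a b c p8 p2 p5 7 = c \<and>
   upd w a b c p8 p2 p5 8 = p8 \<and> upd w a b c p8 p2 p5 2 = p2 \<and> upd w a b c p8 p2 p5 5 = p5"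
  by (simp add: upd_def)

lemma SB_SA:
  assumes "w \<in> SB"
  shows "w \<in> zariski_closure 8 SA"
proof -
  have w: "w \<in> W8" and cab: "cr (w 1) (w 4) \<noteq> 0" and cbc: "cr (w 4) (w 7) \<noteq> 0" and cac: "cr (w 1) (w 7) \<noteq> 0"
    using assms unfolding SB_def by auto
  note F = W8_facts[OF w]
  define a b c p8 p2 p5 where "a = w 1" and "b = w 4" and "c = w 7" and "p8 = w 8" and "p2 = w 2" and "p5 = w 5"
  show ?thesis
  proof (cases "det3 a b c = 0")
    case False
    then have "w \<in> SA" using w unfolding SA_def a_def b_def c_def by blast
    then show ?thesis using cl_sup[of SA 8] unfolding SA_def W8_def by blast
  next
    case True
    obtain e where e: "det3 a b e \<noteq> 0" using cr_nonzero_det cab unfolding a_def b_def by blast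
    obtain \<beta> \<gamma> where p2: "p2 = \<beta> *s b + \<gamma> *s c"
      using span2[of b c p2] cbc F(3) unfolding b_def c_def p2_def by blast
    have "det3 p5 a c = 0" using F(4) det3_swap12[of p5 a c] unfolding a_def c_def p5_def by simp
    then obtain \<alpha> \<delta> where p5: "p5 = \<alpha> *s a + \<delta> *s c"
      using span2[of a c p5] cac unfolding a_def c_def by auto
    let ?c = "\<lambda>t. c + t *s e"
    show ?thesis
    proof (rule upd_curve[OF F(1), where fa = "\<lambda>_. a" and fb = "\<lambda>_. b" and fc = ?c and fx = "\<lambda>_. p8"
          and fy = "\<lambda>t. \<beta> *s b + \<gamma> *s ?c t" and fz = "\<lambda>t. \<alpha> *s a + \<delta> *s ?c t" and g = "\<lambda>t. t * det3 a b e" and tz = 1])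
      fix t :: complex assume g: "t * det3 a b e \<noteq> 0"
      let ?u = "upd w a b (?c t) p8 (\<beta> *s b + \<gamma> *s ?c t) (\<alpha> *s a + \<delta> *s ?c t)"
      have d1: "det3 a b (?c t) = t * det3 a b e" using True by (simp add: det3_def algebra_simps)
      have "Wc ?u" unfolding Wc_upd using F(2) by (simp add: a_def b_def p8_def) (simp add: det3_def algebra_simps)
      then show "?u \<in> SA" unfolding SA_def using upd_W8 upd_vals d1 g by simp
    qed (use e in \<open>auto simp: a_def[symmetric] a_def[simplified, symmetric] b_def[symmetric] c_def[symmetric] p8_def[symmetric]
        p2_def[symmetric] p5_def[symmetric] p2[symmetric] p5[symmetric] intro!: pf1_add pf1_mult pf1_diff pf1_const pf1_id\<close>)
  qed
qed


lemma SB_SA_sub: "SB \<subseteq> zariski_closure 8 SA" using SB_SA by blast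

lemma SA_Good_sub: "SA \<subseteq> zariski_closure 8 Good8" using SA_Good by blast

lemma SB_Good_sub: "SB \<subseteq> zariski_closure 8 Good8"
  using SB_SA_sub SA_Good_sub cl_trans by blast

lemma upd_SB: "Wc (upd w a b c p8 p2 p5) \<Longrightarrow> cr a b \<noteq> 0 \<Longrightarrow> cr b c \<noteq> 0 \<Longrightarrow> cr a c \<noteq> 0 \<Longrightarrow>
   upd w a b c p8 p2 p5 \<in> SB"
  unfolding SB_def using upd_W8 upd_vals by simp

lemma upd_SA: "Wc (upd w a b c p8 p2 p5) \<Longrightarrow> det3 a b c \<noteq> 0 \<Longrightarrow> upd w a b c p8 p2 p5 \<in> SA"
  unfolding SA_def using upd_W8 upd_vals by simp

lemma CA:
  assumes w: "w \<in> W8" and nz: "w 1 \<noteq> 0" "w 4 \<noteq> 0" and par: "cr (w 1) (w 4) = 0" and np: "cr (w 1) (w 7) \<noteq> 0"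
  shows "w \<in> zariski_closure 8 Good8"
proof -
  note F = W8_facts[OF w]
  define a b c p8 p2 p5 where "a = w 1" and "b = w 4" and "c = w 7" and "p8 = w 8" and "p2 = w 2" and "p5 = w 5"
  note defs = a_def[symmetric] a_def[simplified, symmetric] b_def[symmetric] c_def[symmetric] p8_def[symmetric]
        p2_def[symmetric] p5_def[symmetric]
  obtain k where k: "k \<noteq> 0" "b = k *s a" using par_nz[of a b] nz par unfolding a_def b_def by blast
  have cbc: "cr b c \<noteq> 0" using k np by (simp add: cr_smult_left a_def c_def)
  have dabc: "det3 a b c = 0" using k by (simp add: det3_def algebra_simps)
  show ?thesis
  proof (cases "det3 a p8 c = 0")
    case False
    obtain \<beta> \<gamma> where p2: "p2 = \<beta> *s b + \<gamma> *s c"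
      using span2[of b c p2] cbc F(3) unfolding b_def c_def p2_def by blast
    let ?b = "\<lambda>t. b + t *s p8"
    have "w \<in> zariski_closure 8 SA"
    proof (rule upd_curve[OF F(1), where fa = "\<lambda>_. a" and fb = ?b and fc = "\<lambda>_. c" and fx = "\<lambda>_. p8"
          and fy = "\<lambda>t. \<beta> *s ?b t + \<gamma> *s c" and fz = "\<lambda>_. p5" and g = "\<lambda>t. t * det3 a p8 c" and tz = 1])
      fix t :: complex assume g: "t * det3 a p8 c \<noteq> 0"
      have d1: "det3 a (?b t) c = t * det3 a p8 c" using dabc by (simp add: det3_def algebra_simps)
      have e1: "det3 a (?b t) p8 = det3 a b p8" by (simp add: det3_def algebra_simps)
      show "upd w a (?b t) c p8 (\<beta> *s ?b t + \<gamma> *s c) p5 \<in> SA"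
        apply (rule upd_SA)
        unfolding Wc_upd e1 d1 using F(2,4) g
        by (simp_all add: a_def b_def c_def p8_def p5_def) (simp add: det3_def algebra_simps)
    qed (use False in \<open>auto simp: defs p2[symmetric] intro!: pf1_add pf1_mult pf1_diff pf1_const pf1_id\<close>)
    then show ?thesis using SA_Good_sub cl_step by blast
  next
    case True
    let ?b = "\<lambda>t. b + t *s c"
    have "w \<in> zariski_closure 8 SB"
    proof (rule upd_curve[OF F(1), where fa = "\<lambda>_. a" and fb = ?b and fc = "\<lambda>_. c" and fx = "\<lambda>_. p8"
          and fy = "\<lambda>_. p2" and fz = "\<lambda>_. p5" and g = "\<lambda>t. t" and tz = 1])
      fix t :: complex assume g: "t \<noteq> 0"
      have c1: "cr a (?b t) = t *s cr a c" using par by (simp add: vec3_eq cr_comp a_def b_def algebra_simps)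
      have c2: "cr (?b t) c = cr b c" by (simp add: vec3_eq cr_comp algebra_simps)
      have e1: "det3 a (?b t) p8 = det3 a b p8 - t * det3 a p8 c" by (simp add: det3_def algebra_simps)
      have e2: "det3 p2 (?b t) c = det3 p2 b c" by (simp add: det3_def algebra_simps)
      show "upd w a (?b t) c p8 p2 p5 \<in> SB"
        apply (rule upd_SB)
        unfolding Wc_upd e1 e2 c1 c2 using F(2-4) g True cbc np
        by (simp_all add: a_def b_def c_def p8_def p2_def p5_def)
    qed (auto simp: defs intro!: pf1_add pf1_mult pf1_diff pf1_const pf1_id)
    then show ?thesis using SB_Good_sub cl_step by blast
  qed
qed

lemma CB:
  assumes w: "w \<in> W8" and nz: "w 4 \<noteq> 0" "w 7 \<noteq> 0" and par: "cr (w 4) (w 7) = 0" and np: "cr (w 1) (w 4) \<noteq> 0"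
  shows "w \<in> zariski_closure 8 Good8"
proof -
  note F = W8_facts[OF w]
  define a b c p8 p2 p5 where "a = w 1" and "b = w 4" and "c = w 7" and "p8 = w 8" and "p2 = w 2" and "p5 = w 5"
  note defs = a_def[symmetric] a_def[simplified, symmetric] b_def[symmetric] c_def[symmetric] p8_def[symmetric]
        p2_def[symmetric] p5_def[symmetric]
  obtain k where k: "k \<noteq> 0" "c = k *s b" using par_nz[of b c] nz par unfolding b_def c_def by blast
  have cac: "cr a c \<noteq> 0" using k np by (simp add: cr_smult_right a_def b_def)
  have cca: "cr c a \<noteq> 0" using cac cr_swap[of c a] by auto
  have cba: "cr b a \<noteq> 0" using np cr_swap[of b a] by (auto simp: a_def b_def)
  have dabc: "det3 a b c = 0" using k by (simp add: det3_def algebra_simps)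
  show ?thesis
  proof (cases "det3 a b p2 = 0")
    case False
    have "det3 p5 c a = 0" using F(4) det3_cyc[of p5 c a] det3_cyc[of c a p5] by (simp add: a_def c_def p5_def)
    then obtain \<beta> \<gamma> where p5: "p5 = \<beta> *s c + \<gamma> *s a"
      using span2[of c a p5] cca by blast
    let ?c = "\<lambda>t. c + t *s p2"
    have "w \<in> zariski_closure 8 SA"
    proof (rule upd_curve[OF F(1), where fa = "\<lambda>_. a" and fb = "\<lambda>_. b" and fc = ?c and fx = "\<lambda>_. p8"
          and fy = "\<lambda>_. p2" and fz = "\<lambda>t. \<beta> *s ?c t + \<gamma> *s a" and g = "\<lambda>t. t * det3 a b p2" and tz = 1])
      fix t :: complex assume g: "t * det3 a b p2 \<noteq> 0"
      have d1: "det3 a b (?c t) = t * det3 a b p2" using dabc by (simp add: det3_def algebra_simps)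
      have e1: "det3 p2 b (?c t) = det3 p2 b c" by (simp add: det3_def algebra_simps)
      show "upd w a b (?c t) p8 p2 (\<beta> *s ?c t + \<gamma> *s a) \<in> SA"
        apply (rule upd_SA)
        unfolding Wc_upd e1 d1 using F(2,3) g
        by (simp_all add: a_def b_def c_def p8_def p2_def) (simp add: det3_def algebra_simps)
    qed (use False in \<open>auto simp: defs p5[symmetric] intro!: pf1_add pf1_mult pf1_diff pf1_const pf1_id\<close>)
    then show ?thesis using SA_Good_sub cl_step by blast
  next
    case True
    let ?c = "\<lambda>t. c + t *s a"
    have "w \<in> zariski_closure 8 SB"
    proof (rule upd_curve[OF F(1), where fa = "\<lambda>_. a" and fb = "\<lambda>_. b" and fc = ?c and fx = "\<lambda>_. p8"
          and fy = "\<lambda>_. p2" and fz = "\<lambda>_. p5" and g = "\<lambda>t. t" and tz = 1])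
      fix t :: complex assume g: "t \<noteq> 0"
      have c1: "cr b (?c t) = t *s cr b a" using par by (simp add: vec3_eq cr_comp b_def c_def algebra_simps)
      have c2: "cr a (?c t) = cr a c" by (simp add: vec3_eq cr_comp algebra_simps)
      have e1: "det3 p2 b (?c t) = det3 p2 b c - t * det3 a b p2" by (simp add: det3_def algebra_simps)
      have e2: "det3 a p5 (?c t) = det3 a p5 c" by (simp add: det3_def algebra_simps)
      show "upd w a b (?c t) p8 p2 p5 \<in> SB"
        apply (rule upd_SB)
        unfolding Wc_upd e1 e2 c1 c2 using F(2-4) g True cba cac np
        by (simp_all add: a_def b_def c_def p8_def p2_def p5_def)
    qed (auto simp: defs intro!: pf1_add pf1_mult pf1_diff pf1_const pf1_id)
    then show ?thesis using SB_Good_sub cl_step by blast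
  qed
qed

lemma CC:
  assumes w: "w \<in> W8" and nz: "w 1 \<noteq> 0" "w 7 \<noteq> 0" and par: "cr (w 1) (w 7) = 0" and np: "cr (w 1) (w 4) \<noteq> 0"
  shows "w \<in> zariski_closure 8 Good8"
proof -
  note F = W8_facts[OF w]
  define a b c p8 p2 p5 where "a = w 1" and "b = w 4" and "c = w 7" and "p8 = w 8" and "p2 = w 2" and "p5 = w 5"
  note defs = a_def[symmetric] a_def[simplified, symmetric] b_def[symmetric] c_def[symmetric] p8_def[symmetric]
        p2_def[symmetric] p5_def[symmetric]
  obtain k where k: "k \<noteq> 0" "c = k *s a" using par_nz[of a c] nz par unfolding a_def c_def by blast
  have cab: "cr a b \<noteq> 0" using np by (simp add: a_def b_def)
  have cba: "cr b a \<noteq> 0" using cab cr_swap[of b a] by auto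
  have cbc: "cr b c \<noteq> 0" using k cba by (simp add: cr_smult_right)
  have dabc: "det3 a b c = 0" using k by (simp add: det3_def algebra_simps)
  show ?thesis
  proof (cases "det3 p5 b c = 0")
    case False
    have "det3 p8 a b = 0" using F(2) det3_cyc[of p8 a b] by (simp add: a_def b_def p8_def)
    then obtain \<beta> \<gamma> where p8: "p8 = \<beta> *s a + \<gamma> *s b"
      using span2[of a b p8] cab by blast
    let ?a = "\<lambda>t. a + t *s p5"
    have "w \<in> zariski_closure 8 SA"
    proof (rule upd_curve[OF F(1), where fa = ?a and fb = "\<lambda>_. b" and fc = "\<lambda>_. c" and fx = "\<lambda>t. \<beta> *s ?a t + \<gamma> *s b"
          and fy = "\<lambda>_. p2" and fz = "\<lambda>_. p5" and g = "\<lambda>t. t * det3 p5 b c" and tz = 1])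
      fix t :: complex assume g: "t * det3 p5 b c \<noteq> 0"
      have d1: "det3 (?a t) b c = t * det3 p5 b c" using dabc by (simp add: det3_def algebra_simps)
      have e1: "det3 (?a t) p5 c = det3 a p5 c" by (simp add: det3_def algebra_simps)
      show "upd w (?a t) b c (\<beta> *s ?a t + \<gamma> *s b) p2 p5 \<in> SA"
        apply (rule upd_SA)
        unfolding Wc_upd e1 d1 using F(3,4) g
        by (simp_all add: a_def b_def c_def p2_def p5_def) (simp add: det3_def algebra_simps)
    qed (use False in \<open>auto simp: defs p8[symmetric] intro!: pf1_add pf1_mult pf1_diff pf1_const pf1_id\<close>)
    then show ?thesis using SA_Good_sub cl_step by blast
  next
    case True
    let ?a = "\<lambda>t. a + t *s b"
    have "w \<in> zariski_closure 8 SB"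
    proof (rule upd_curve[OF F(1), where fa = ?a and fb = "\<lambda>_. b" and fc = "\<lambda>_. c" and fx = "\<lambda>_. p8"
          and fy = "\<lambda>_. p2" and fz = "\<lambda>_. p5" and g = "\<lambda>t. t" and tz = 1])
      fix t :: complex assume g: "t \<noteq> 0"
      have c1: "cr (?a t) c = t *s cr b c" using par by (simp add: vec3_eq cr_comp a_def c_def algebra_simps)
      have c2: "cr (?a t) b = cr a b" by (simp add: vec3_eq cr_comp algebra_simps)
      have e1: "det3 (?a t) b p8 = det3 a b p8" by (simp add: det3_def algebra_simps)
      have e2: "det3 (?a t) p5 c = det3 a p5 c - t * det3 p5 b c" by (simp add: det3_def algebra_simps)
      show "upd w (?a t) b c p8 p2 p5 \<in> SB"
        apply (rule upd_SB)
        unfolding Wc_upd e1 e2 c1 c2 using F(2-4) g True cbc cab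
        by (simp_all add: a_def b_def c_def p8_def p2_def p5_def)
    qed (auto simp: defs intro!: pf1_add pf1_mult pf1_diff pf1_const pf1_id)
    then show ?thesis using SB_Good_sub cl_step by blast
  qed
qed


definition TD :: "config set" where
  "TD = {w \<in> W8. w 1 \<noteq> 0 \<and> w 4 \<noteq> 0 \<and> w 7 \<noteq> 0 \<and> cr (w 1) (w 4) = 0 \<and> cr (w 1) (w 7) = 0 \<and>
     det3 (w 1) (w 8) (w 5) \<noteq> 0 \<and> det3 (w 1) (w 2) (w 5) \<noteq> 0 \<and> det3 (w 1) (w 8) (w 2) \<noteq> 0}"

lemma basis_compl:
  assumes "(a::complex^3) \<noteq> 0"
  shows "\<exists>e f. det3 a e f \<noteq> 0"
proof -
  obtain j where j: "a $ j \<noteq> 0" using nz_comp[OF assms] by blast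
  consider "j = 1" | "j = 2" | "j = 3" using exhaust_3[of j] by blast
  then show ?thesis
  proof cases
    case 1 then show ?thesis using j
      by (intro exI[of _ "vector [0,1,0]"] exI[of _ "vector [0,0,1]"]) (simp add: det3_def)
  next
    case 2 then show ?thesis using j
      by (intro exI[of _ "vector [1,0,0]"] exI[of _ "vector [0,0,1]"]) (simp add: det3_def)
  next
    case 3 then show ?thesis using j
      by (intro exI[of _ "vector [1,0,0]"] exI[of _ "vector [0,1,0]"]) (simp add: det3_def)
  qed
qed

lemma TD_SA:
  assumes "w \<in> TD"
  shows "w \<in> zariski_closure 8 SA"
proof -
  have w: "w \<in> W8" and nz: "w 1 \<noteq> 0" "w 4 \<noteq> 0" "w 7 \<noteq> 0" and par: "cr (w 1) (w 4) = 0" "cr (w 1) (w 7) = 0"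
    and dd: "det3 (w 1) (w 8) (w 5) \<noteq> 0" "det3 (w 1) (w 2) (w 5) \<noteq> 0" "det3 (w 1) (w 8) (w 2) \<noteq> 0"
    using assms unfolding TD_def by auto
  note F = W8_facts[OF w]
  define a b c p8 p2 p5 where "a = w 1" and "b = w 4" and "c = w 7" and "p8 = w 8" and "p2 = w 2" and "p5 = w 5"
  note defs = a_def[symmetric] a_def[simplified, symmetric] b_def[symmetric] c_def[symmetric] p8_def[symmetric]
        p2_def[symmetric] p5_def[symmetric]
  obtain kb where kb: "kb \<noteq> 0" "b = kb *s a" using par_nz[of a b] nz par unfolding a_def b_def by blast
  obtain kc where kc: "kc \<noteq> 0" "c = kc *s a" using par_nz[of a c] nz par unfolding a_def c_def by blast
  define D0 where "D0 = det3 a p8 p5"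
  have D0: "D0 \<noteq> 0" using dd unfolding D0_def a_def p8_def p5_def by simp
  define \<alpha> \<beta> \<gamma> where "\<alpha> = det3 p2 p8 p5 / D0" and "\<beta> = det3 a p2 p5 / D0" and "\<gamma> = det3 a p8 p2 / D0"
  have p2: "p2 = \<alpha> *s a + \<beta> *s p8 + \<gamma> *s p5"
    using cramer[of a p8 p5 p2] D0 unfolding \<alpha>_def \<beta>_def \<gamma>_def D0_def by simp
  have bnz: "\<beta> \<noteq> 0" using dd D0 unfolding \<beta>_def a_def p2_def p5_def by simp
  have gnz: "\<gamma> \<noteq> 0" using dd D0 unfolding \<gamma>_def a_def p2_def p8_def by simp
  define x y \<mu> where "x = kb * \<beta>" and "y = - kc * \<gamma>" and "\<mu> = \<beta> * \<alpha>"
  have xy: "x * y * D0 \<noteq> 0" using kb kc bnz gnz D0 unfolding x_def y_def by simp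
  let ?b = "\<lambda>t. b + (t * x) *s p8"
  let ?c = "\<lambda>t. c + (t * y) *s p5"
  let ?p = "\<lambda>t. p2 + (t * \<mu>) *s p8"
  show ?thesis
  proof (rule upd_curve[OF F(1), where fa = "\<lambda>_. a" and fb = ?b and fc = ?c and fx = "\<lambda>_. p8"
        and fy = ?p and fz = "\<lambda>_. p5" and g = "\<lambda>t. t * t * x * y * D0" and tz = 1])
    fix t :: complex assume g: "t * t * x * y * D0 \<noteq> 0"
    have d1: "det3 a (?b t) (?c t) = t * t * x * y * D0"
      unfolding kb(2) kc(2) D0_def by (simp add: det3_def algebra_simps)
    have w1: "det3 a (?b t) p8 = 0" unfolding kb(2) by (simp add: det3_def algebra_simps)
    have w2: "det3 (?p t) (?b t) (?c t) = 0"
      unfolding kb(2) kc(2) p2 x_def y_def \<mu>_def by (simp add: det3_def algebra_simps)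
    have w3: "det3 a p5 (?c t) = 0" unfolding kc(2) by (simp add: det3_def algebra_simps)
    show "upd w a (?b t) (?c t) p8 (?p t) p5 \<in> SA"
      by (rule upd_SA) (use w1 w2 w3 d1 g in \<open>simp_all add: Wc_upd\<close>)
  qed (use xy in \<open>auto simp: defs intro!: pf1_add pf1_mult pf1_diff pf1_const pf1_id\<close>)
qed

lemma allpar_TD:
  assumes w: "w \<in> ambient 8" and nz: "w 1 \<noteq> 0" "w 4 \<noteq> 0" "w 7 \<noteq> 0"
    and par: "cr (w 1) (w 4) = 0" "cr (w 1) (w 7) = 0"
  shows "w \<in> zariski_closure 8 TD"
proof -
  define a b c p8 p2 p5 where "a = w 1" and "b = w 4" and "c = w 7" and "p8 = w 8" and "p2 = w 2" and "p5 = w 5"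
  note defs = a_def[symmetric] a_def[simplified, symmetric] b_def[symmetric] c_def[symmetric] p8_def[symmetric]
        p2_def[symmetric] p5_def[symmetric]
  obtain kb where kb: "kb \<noteq> 0" "b = kb *s a" using par_nz[of a b] nz par unfolding a_def b_def by blast
  obtain kc where kc: "kc \<noteq> 0" "c = kc *s a" using par_nz[of a c] nz par unfolding a_def c_def by blast
  obtain e f where ef: "det3 a e f \<noteq> 0" using basis_compl nz unfolding a_def by blast
  let ?x = "\<lambda>t. p8 + t *s (e - p8)"
  let ?z = "\<lambda>t. p5 + t *s (f - p5)"
  let ?y = "\<lambda>t. p2 + t *s ((e + f) - p2)"
  let ?g = "\<lambda>t. det3 a (?x t) (?z t) * det3 a (?y t) (?z t) * det3 a (?x t) (?y t)"
  show ?thesis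
  proof (rule upd_curve[OF w, where fa = "\<lambda>_. a" and fb = "\<lambda>_. b" and fc = "\<lambda>_. c" and fx = ?x
        and fy = ?y and fz = ?z and g = ?g and tz = 1])
    have x1: "?x 1 = e" "?z 1 = f" "?y 1 = e + f" by (simp_all add: vec3_eq)
    have d2: "det3 a (e + f) f = det3 a e f" "det3 a e (e + f) = det3 a e f"
      by (simp_all add: det3_def algebra_simps)
    show "?g 1 \<noteq> 0" unfolding x1 d2 using ef by simp
    show "pf1 ?g" by (auto intro!: pf1_det3 pf1_add pf1_mult pf1_diff pf1_const pf1_id)
    fix t :: complex assume g: "?g t \<noteq> 0"
    have "Wc (upd w a b c (?x t) (?y t) (?z t))" unfolding Wc_upd kb(2) kc(2)
      by (simp add: det3_def algebra_simps)
    then show "upd w a b c (?x t) (?y t) (?z t) \<in> TD"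
      unfolding TD_def using upd_W8 upd_vals g nz par by (simp add: defs)
  qed (auto simp: defs intro!: pf1_add pf1_mult pf1_diff pf1_const pf1_id)
qed

lemma W8_Good:
  assumes w: "w \<in> W8" and nz: "w 1 \<noteq> 0" "w 4 \<noteq> 0" "w 7 \<noteq> 0"
  shows "w \<in> zariski_closure 8 Good8"
proof -
  have amb: "w \<in> ambient 8" using w W8_facts by blast
  have swap: "cr u v = 0 \<longleftrightarrow> cr v u = 0" for u v using cr_swap[of v u] by auto
  have trans: "cr u v = 0" if h: "x \<noteq> 0" "cr x u = 0" "cr x v = 0" for x u v
  proof -
    obtain k1 where "u = k1 *s x" using parallel_of_cr h(1,2) by blast
    moreover obtain k2 where "v = k2 *s x" using parallel_of_cr h(1,3) by blast
    ultimately show ?thesis by (simp add: vec3_eq cr_comp algebra_simps)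
  qed
  show ?thesis
  proof (cases "cr (w 1) (w 4) = 0")
    case True
    show ?thesis
    proof (cases "cr (w 1) (w 7) = 0")
      case True2: True
      have "w \<in> zariski_closure 8 TD" by (rule allpar_TD[OF amb nz True True2])
      moreover have "TD \<subseteq> zariski_closure 8 Good8"
        using TD_SA SA_Good_sub cl_trans by blast
      ultimately show ?thesis using cl_step by blast
    next
      case False
      then show ?thesis using CA[OF w nz(1,2) True] by blast
    qed
  next
    case False
    show ?thesis
    proof (cases "cr (w 4) (w 7) = 0")
      case True
      then show ?thesis using CB[OF w nz(2,3) True False] by blast
    next
      case False2: False
      show ?thesis
      proof (cases "cr (w 1) (w 7) = 0")
        case True
        then show ?thesis using CC[OF w nz(1,3) True False] by blast
      next
        case False3: False
        have "w \<in> SB" unfolding SB_def using w False False2 False3 by blast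
        then show ?thesis using SB_Good_sub by blast
      qed
    qed
  qed
qed


lemma det3_dot: "det3 n u v = n$1 * cr u v $ 1 + n$2 * cr u v $ 2 + n$3 * cr u v $ 3"
  by (simp add: det3_def cr_comp algebra_simps)

definition dot3 :: "complex^3 \<Rightarrow> complex^3 \<Rightarrow> complex" where
  "dot3 n y = n$1 * y$1 + n$2 * y$2 + n$3 * y$3"

lemma perp1: "\<exists>n. n \<noteq> 0 \<and> dot3 n y = 0"
proof (cases "y$1 \<noteq> 0 \<or> y$2 \<noteq> 0")
  case True then show ?thesis
    by (intro exI[of _ "vector [- y$2, y$1, 0]"]) (auto simp: vec3_eq dot3_def algebra_simps)
next
  case False then show ?thesis
    by (intro exI[of _ "vector [1, 0, 0]"]) (auto simp: vec3_eq dot3_def)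
qed

lemma perp2: "\<exists>n. n \<noteq> 0 \<and> dot3 n y = 0 \<and> dot3 n z = 0"
proof (cases "cr y z = 0")
  case False then show ?thesis
    by (intro exI[of _ "cr y z"]) (auto simp: dot3_def cr_comp algebra_simps)
next
  case True
  show ?thesis
  proof (cases "y = 0")
    case True then show ?thesis using perp1[of z] by (auto simp: dot3_def)
  next
    case False
    obtain k where k: "z = k *s y" using parallel_of_cr[OF False \<open>cr y z = 0\<close>] by blast
    obtain n where n: "n \<noteq> 0" "dot3 n y = 0" using perp1[of y] by blast
    have "dot3 n z = k * dot3 n y" by (simp add: k dot3_def algebra_simps)
    then show ?thesis using n by (intro exI[of _ n]) auto
  qed
qed

lemma perp_det: "\<exists>n. n \<noteq> 0 \<and> det3 n u v = 0 \<and> det3 n p q = 0"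
  using perp2[of "cr u v" "cr p q"] by (simp add: det3_dot dot3_def)

lemma rep:
  assumes "cr u v = 0" "a \<noteq> 0" "(if u \<noteq> 0 then u else v) \<noteq> 0 \<longrightarrow> a = (if u \<noteq> 0 then u else v)"
  shows "\<exists>l1 l2. u = l1 *s a \<and> v = l2 *s a"
proof (cases "u = 0")
  case False
  then have "a = u" using assms(3) by simp
  moreover obtain k where "v = k *s u" using parallel_of_cr[OF False assms(1)] by blast
  ultimately show ?thesis by (intro exI[of _ 1] exI[of _ k]) simp
next
  case True
  show ?thesis
  proof (cases "v = 0")
    case False then have "a = v" using assms(3) True by simp
    then show ?thesis using True by (intro exI[of _ 0] exI[of _ 1]) simp
  next
    case True2: True then show ?thesis using True by (intro exI[of _ 0] exI[of _ 0]) simp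
  qed
qed

lemma Cdep_circ:
  "C_dep {1,3}" "C_dep {4,6}" "C_dep {7,9}"
  "C_dep {1,4,8}" "C_dep {1,6,8}" "C_dep {3,4,8}" "C_dep {3,6,8}"
  "C_dep {2,4,7}" "C_dep {2,4,9}" "C_dep {2,6,7}" "C_dep {2,6,9}"
  "C_dep {1,5,7}" "C_dep {1,5,9}" "C_dep {3,5,7}" "C_dep {3,5,9}"
  by (simp_all add: C_dep_def C_rank_def plc_rank_def quot_map_def P_lines_def)

lemma circuitC_cl:
  assumes x: "x \<in> circuit_variety 9 C_dep"
  shows "x \<in> zariski_closure 9 (realizations 9 C_dep)"
proof -
  have amb: "x \<in> ambient 9" using x unfolding circuit_variety_def by blast
  have dep: "fam_dependent x S" if "S \<subseteq> {1..9}" "C_dep S" for S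
    using x that unfolding circuit_variety_def by blast
  have p2: "cr (x i) (x j) = 0" if "C_dep {i,j}" "i \<noteq> j" "i \<in> {1..9}" "j \<in> {1..9}" for i j
    using dep[of "{i,j}"] that fd_pair by auto
  have p3: "det3 (x i) (x j) (x k) = 0" if "C_dep {i,j,k}" "i \<noteq> j" "i \<noteq> k" "j \<noteq> k"
     "i \<in> {1..9}" "j \<in> {1..9}" "k \<in> {1..9}" for i j k
    using dep[of "{i,j,k}"] that fd_triple by auto
  note cc = Cdep_circ
  have c13: "cr (x 1) (x 3) = 0" by (rule p2[OF cc(1)]) auto
  have c46: "cr (x 4) (x 6) = 0" by (rule p2[OF cc(2)]) auto
  have c79: "cr (x 7) (x 9) = 0" by (rule p2[OF cc(3)]) auto
  define a0 where "a0 = (if x 1 \<noteq> 0 then x 1 else x 3)"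
  define b0 where "b0 = (if x 4 \<noteq> 0 then x 4 else x 6)"
  define c0 where "c0 = (if x 7 \<noteq> 0 then x 7 else x 9)"
  have L1: "det3 a0 b0 (x 8) = 0"
    unfolding a0_def b0_def using p3[OF cc(4)] p3[OF cc(5)] p3[OF cc(6)] p3[OF cc(7)] by auto
  have L2: "det3 (x 2) b0 c0 = 0"
    unfolding b0_def c0_def using p3[OF cc(8)] p3[OF cc(9)] p3[OF cc(10)] p3[OF cc(11)] by auto
  have L3: "det3 a0 (x 5) c0 = 0"
    unfolding a0_def c0_def using p3[OF cc(12)] p3[OF cc(13)] p3[OF cc(14)] p3[OF cc(15)] by auto
  obtain a where a: "a \<noteq> 0" "det3 a b0 (x 8) = 0" "det3 a (x 5) c0 = 0" "a0 \<noteq> 0 \<longrightarrow> a = a0"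
  proof (cases "a0 = 0")
    case True
    obtain n where "n \<noteq> 0" "det3 n b0 (x 8) = 0" "det3 n (x 5) c0 = 0" using perp_det by blast
    then show ?thesis using that True by blast
  next
    case False then show ?thesis using that L1 L3 by blast
  qed
  obtain b where b: "b \<noteq> 0" "det3 a b (x 8) = 0" "det3 (x 2) b c0 = 0" "b0 \<noteq> 0 \<longrightarrow> b = b0"
  proof (cases "b0 = 0")
    case True
    obtain n where n: "n \<noteq> 0" "det3 n a (x 8) = 0" "det3 n (x 2) c0 = 0" using perp_det by blast
    have "det3 a n (x 8) = 0" "det3 (x 2) n c0 = 0"
      using n det3_swap12[of a n "x 8"] det3_swap12[of "x 2" n c0] by auto
    then show ?thesis using that True n(1) by blast
  next
    case False then show ?thesis using that L2 a(2) by blast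
  qed
  obtain c where c: "c \<noteq> 0" "det3 (x 2) b c = 0" "det3 a (x 5) c = 0" "c0 \<noteq> 0 \<longrightarrow> c = c0"
  proof (cases "c0 = 0")
    case True
    obtain n where n: "n \<noteq> 0" "det3 n (x 2) b = 0" "det3 n a (x 5) = 0" using perp_det by blast
    have "det3 (x 2) b n = 0" "det3 a (x 5) n = 0"
      using n det3_cyc[of n "x 2" b] det3_cyc[of n a "x 5"] by auto
    then show ?thesis using that True n(1) by blast
  next
    case False then show ?thesis using that b(3) a(3) by blast
  qed
  obtain l1 l3 where l13: "x 1 = l1 *s a" "x 3 = l3 *s a" using rep[OF c13 a(1)] a(4) unfolding a0_def by blast
  obtain l4 l6 where l46: "x 4 = l4 *s b" "x 6 = l6 *s b" using rep[OF c46 b(1)] b(4) unfolding b0_def by blast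
  obtain l7 l9 where l79: "x 7 = l7 *s c" "x 9 = l9 *s c" using rep[OF c79 c(1)] c(4) unfolding c0_def by blast
  define w where "w = restrict (\<lambda>i. if i = 1 then a else if i = 4 then b else if i = 7 then c else x i) {1..8::nat}"
  define lam where "lam = (\<lambda>i::nat. if i = 1 then l1 else if i = 3 then l3 else if i = 4 then l4
      else if i = 6 then l6 else if i = 7 then l7 else if i = 9 then l9 else 1)"
  have wv: "w 1 = a" "w 4 = b" "w 7 = c" "w 2 = x 2" "w 5 = x 5" "w 8 = x 8" "w (Suc 0) = a" by (simp_all add: w_def)
  have x1: "x (Suc 0) = l1 *s a" using l13(1) by simp
  have wW: "w \<in> W8" unfolding W8_def Wc_def using wv b(2) c(2,3) by (simp add: w_def ambient_def)
  have "w \<in> zariski_closure 8 Good8" by (rule W8_Good[OF wW]) (use wv a(1) b(1) c(1) in auto)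
  then have cl: "psi lam w \<in> zariski_closure 9 (realizations 9 C_dep)" by (rule clGood_to_clC)
  have "x = psi lam w"
  proof (rule ambient_ext[OF amb])
    show "psi lam w \<in> ambient 9" unfolding psi_def ambient_def by auto
    fix i assume "i \<in> {1..9::nat}"
    then have "i = 1 \<or> i = 2 \<or> i = 3 \<or> i = 4 \<or> i = 5 \<or> i = 6 \<or> i = 7 \<or> i = 8 \<or> i = 9" by auto
    then show "x i = psi lam w i"
      by (elim disjE) (simp_all add: psi_def lam_def quot_map_def wv x1 l13 l46 l79)
  qed
  then show ?thesis using cl by simp
qed

lemma circuitC_eq: "circuit_variety 9 C_dep = zariski_closure 9 (realizations 9 C_dep)"
  using circuitC_cl closure_in_circuit[OF real_in_circuit] by blast


lemma fd_pcfg: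
  assumes "S \<subseteq> {1..d}" "inj_on s S"
  shows "fam_dependent (pcfg d s \<gamma>) S \<longleftrightarrow> fam_dependent \<gamma> (s ` S)"
proof -
  have "fam_dependent (pcfg d s \<gamma>) S \<longleftrightarrow> fam_dependent (\<gamma> \<circ> s) S"
    by (rule fd_cong) (use assms(1) in \<open>auto simp: pcfg_def\<close>)
  also have "\<dots> \<longleftrightarrow> fam_dependent \<gamma> (s ` S)" using fd_image[OF assms(2)] by simp
  finally show ?thesis .
qed

theorem mainTheorem12:
  assumes "automorphism_MP \<sigma>"
  shows "circuit_variety 9 (perm_dep \<sigma> C_dep) = matroid_variety 9 (perm_dep \<sigma> C_dep)
         \<and> matroid_variety 9 (perm_dep \<sigma> C_dep) \<subseteq> matroid_variety 9 MP_dep"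
proof -
  have bij: "bij_betw \<sigma> {1..9} {1..9}" and aut: "\<And>S. S \<subseteq> {1..9} \<Longrightarrow> MP_dep S \<longleftrightarrow> MP_dep (\<sigma> ` S)"
    using assms unfolding automorphism_MP_def by auto
  define \<tau> where "\<tau> = the_inv_into {1..9} \<sigma>"
  have bijt: "bij_betw \<tau> {1..9} {1..9}" unfolding \<tau>_def by (rule bij_betw_the_inv_into[OF bij])
  have injs: "inj_on \<sigma> {1..9}" using bij bij_betw_imp_inj_on by blast
  have injt: "inj_on \<tau> {1..9}" using bijt bij_betw_imp_inj_on by blast
  have st: "\<sigma> (\<tau> i) = i" if "i \<in> {1..9}" for i
    unfolding \<tau>_def using f_the_inv_into_f_bij_betw[OF bij that] .
  have ts: "\<tau> (\<sigma> i) = i" if "i \<in> {1..9}" for i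
    unfolding \<tau>_def using the_inv_into_f_f[OF injs that] .
  have simg: "\<sigma> ` S \<subseteq> {1..9}" if "S \<subseteq> {1..9}" for S using bij that bij_betw_imp_surj_on by blast
  have timg: "\<tau> ` S \<subseteq> {1..9}" if "S \<subseteq> {1..9}" for S using bijt that bij_betw_imp_surj_on by blast
  have st_img: "\<sigma> ` (\<tau> ` T) = T" if "T \<subseteq> {1..9}" for T
    using that st by (force simp: image_image)
  have ts_img: "\<tau> ` (\<sigma> ` S) = S" if "S \<subseteq> {1..9}" for S
    using that ts by (force simp: image_image)
  have injsS: "inj_on \<sigma> S" if "S \<subseteq> {1..9}" for S using injs that inj_on_subset by blast
  have injtS: "inj_on \<tau> S" if "S \<subseteq> {1..9}" for S using injt that inj_on_subset by blast
  have Cdep_sub: "C_dep S \<Longrightarrow> S \<subseteq> {1..9}" for S unfolding C_dep_def by blast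
  let ?K = "perm_dep \<sigma> C_dep"
  have T1: "pcfg 9 \<sigma> \<gamma> \<in> circuit_variety 9 C_dep" if "\<gamma> \<in> circuit_variety 9 ?K" for \<gamma>
    unfolding circuit_variety_def
  proof (intro CollectI conjI allI impI)
    show "pcfg 9 \<sigma> \<gamma> \<in> ambient 9" by (rule pcfg_ambient)
    fix S assume S: "S \<subseteq> {1..9::nat}" "C_dep S"
    have "?K (\<sigma> ` S)" unfolding perm_dep_def using S by blast
    then have "fam_dependent \<gamma> (\<sigma> ` S)" using that simg[OF S(1)] unfolding circuit_variety_def by blast
    then show "fam_dependent (pcfg 9 \<sigma> \<gamma>) S" using fd_pcfg[OF S(1) injsS[OF S(1)]] by simp
  qed
  have T2: "pcfg 9 \<tau> y \<in> realizations 9 ?K" if "y \<in> realizations 9 C_dep" for y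
    unfolding realizations_def
  proof (intro CollectI conjI allI impI)
    show "pcfg 9 \<tau> y \<in> ambient 9" by (rule pcfg_ambient)
    fix T assume T: "T \<subseteq> {1..9::nat}"
    have "fam_dependent (pcfg 9 \<tau> y) T \<longleftrightarrow> fam_dependent y (\<tau> ` T)" by (rule fd_pcfg[OF T injtS[OF T]])
    also have "\<dots> \<longleftrightarrow> C_dep (\<tau> ` T)" using that timg[OF T] unfolding realizations_def by blast
    also have "\<dots> \<longleftrightarrow> ?K T"
    proof
      assume "C_dep (\<tau> ` T)" then show "?K T" unfolding perm_dep_def using st_img[OF T] by metis
    next
      assume "?K T"
      then obtain S where S: "C_dep S" "T = \<sigma> ` S" unfolding perm_dep_def by blast
      then show "C_dep (\<tau> ` T)" using ts_img[OF Cdep_sub[OF S(1)]] by simp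
    qed
    finally show "fam_dependent (pcfg 9 \<tau> y) T \<longleftrightarrow> ?K T" .
  qed
  have T3: "pcfg 9 \<tau> y \<in> realizations 9 MP_dep" if "y \<in> realizations 9 MP_dep" for y
    unfolding realizations_def
  proof (intro CollectI conjI allI impI)
    show "pcfg 9 \<tau> y \<in> ambient 9" by (rule pcfg_ambient)
    fix T assume T: "T \<subseteq> {1..9::nat}"
    have "fam_dependent (pcfg 9 \<tau> y) T \<longleftrightarrow> fam_dependent y (\<tau> ` T)" by (rule fd_pcfg[OF T injtS[OF T]])
    also have "\<dots> \<longleftrightarrow> MP_dep (\<tau> ` T)" using that timg[OF T] unfolding realizations_def by blast
    also have "\<dots> \<longleftrightarrow> MP_dep T" using aut[OF timg[OF T]] st_img[OF T] by simp
    finally show "fam_dependent (pcfg 9 \<tau> y) T \<longleftrightarrow> MP_dep T" .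
  qed
  have T4: "pcfg 9 \<sigma> \<gamma> \<in> realizations 9 C_dep" if "\<gamma> \<in> realizations 9 ?K" for \<gamma>
    unfolding realizations_def
  proof (intro CollectI conjI allI impI)
    show "pcfg 9 \<sigma> \<gamma> \<in> ambient 9" by (rule pcfg_ambient)
    fix S assume S: "S \<subseteq> {1..9::nat}"
    have "fam_dependent (pcfg 9 \<sigma> \<gamma>) S \<longleftrightarrow> fam_dependent \<gamma> (\<sigma> ` S)" by (rule fd_pcfg[OF S injsS[OF S]])
    also have "\<dots> \<longleftrightarrow> ?K (\<sigma> ` S)" using that simg[OF S] unfolding realizations_def by blast
    also have "\<dots> \<longleftrightarrow> C_dep S"
    proof
      assume "?K (\<sigma> ` S)"
      then obtain S' where S': "C_dep S'" "\<sigma> ` S = \<sigma> ` S'" unfolding perm_dep_def by blast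
      have "S = S'" using S' ts_img[OF S] ts_img[OF Cdep_sub[OF S'(1)]] by metis
      then show "C_dep S" using S' by simp
    next
      assume "C_dep S" then show "?K (\<sigma> ` S)" unfolding perm_dep_def by blast
    qed
    finally show "fam_dependent (pcfg 9 \<sigma> \<gamma>) S \<longleftrightarrow> C_dep S" .
  qed
  have T5: "pcfg 9 \<tau> (pcfg 9 \<sigma> \<gamma>) = \<gamma>" if "\<gamma> \<in> ambient 9" for \<gamma>
  proof (rule ambient_ext[OF pcfg_ambient that])
    fix i assume i: "i \<in> {1..9::nat}"
    then have "\<tau> i \<in> {1..9}" using timg[of "{i}"] by auto
    then show "pcfg 9 \<tau> (pcfg 9 \<sigma> \<gamma>) i = \<gamma> i" using i st by (simp add: pcfg_def)
  qed
  have timg1: "\<tau> ` {1..9} \<subseteq> {1..9}" using timg by blast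
  have A: "circuit_variety 9 ?K \<subseteq> zariski_closure 9 (realizations 9 ?K)"
  proof
    fix \<gamma> assume g: "\<gamma> \<in> circuit_variety 9 ?K"
    have amb: "\<gamma> \<in> ambient 9" using g unfolding circuit_variety_def by blast
    have "pcfg 9 \<sigma> \<gamma> \<in> zariski_closure 9 (realizations 9 C_dep)" using T1[OF g] circuitC_eq by blast
    then have "pcfg 9 \<tau> (pcfg 9 \<sigma> \<gamma>) \<in> zariski_closure 9 (realizations 9 ?K)"
      by (rule pcfg_closure[OF timg1 T2, rotated])
    then show "\<gamma> \<in> zariski_closure 9 (realizations 9 ?K)" using T5[OF amb] by simp
  qed
  have B: "zariski_closure 9 (realizations 9 ?K) \<subseteq> circuit_variety 9 ?K"
    by (rule closure_in_circuit[OF real_in_circuit])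
  have Cc: "realizations 9 ?K \<subseteq> zariski_closure 9 (realizations 9 MP_dep)"
  proof
    fix \<gamma> assume g: "\<gamma> \<in> realizations 9 ?K"
    have amb: "\<gamma> \<in> ambient 9" using g unfolding realizations_def by blast
    have "pcfg 9 \<sigma> \<gamma> \<in> zariski_closure 9 (realizations 9 MP_dep)" by (rule realC_clMP[OF T4[OF g]])
    then have "pcfg 9 \<tau> (pcfg 9 \<sigma> \<gamma>) \<in> zariski_closure 9 (realizations 9 MP_dep)"
      by (rule pcfg_closure[OF timg1 T3, rotated])
    then show "\<gamma> \<in> zariski_closure 9 (realizations 9 MP_dep)" using T5[OF amb] by simp
  qed
  show ?thesis unfolding matroid_variety_def
    using A B cl_trans[OF Cc] by blast
qed


end
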